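(* Let $1\le p\le\infty$, $E=\mathcal{L}^p(I)$, and let $F,B\subset E$ be nonempty sets bounded by $M_F$ and $M_B$ respectively (i.e. $\|g\|_p\le M_F$ for all $g\in F$ and $\|g\|_p\le M_B$ for all $g\in B$). Then for any $f,b\in E$, $$\delta(F,F*_Tb)\le\frac{\Lambda}{1-\Lambda}(M_F+\|b\|_p),\qquad \delta(B,f*_TB)\le\frac{1}{1-\Lambda}(M_B+\|f\|_p).$$ For $0<p<1$ the same holds when $\|g\|_p$ is interpreted as $\int_I|g|^p\,dx$ (including in $\delta$ and in the bounds $M_F,M_B$) and $\Lambda$ is replaced by $\Lambda^p$.
   Context: Let $N\ge 2$, $I=[x_0,x_N]$, $\Delta: x_0<\dots<x_N$ a partition, $L_n(x)=a_nx+b_n$ affine with $L_n(x_0)=x_{n-1}$, $L_n(x_N)=x_n$, $I_1=[x_0,x_1]$, $I_n=(x_{n-1},x_n]$ for $n\ge2$, and $\alpha=(\alpha_1,\dots,\alpha_N)\in(\mathcal{L}^\infty(I))^N$ with $\Lambda:=\operatorname{ess\,sup}\{|\alpha_n(x)|:x\in I,n=1,\dots,N\}<1$. For $f,b\in\mathcal{L}^p(I)$, $f*_Tb$ is the unique fixed point in $\mathcal{L}^p(I)$ of the contraction $Tg(x):=f(x)+\alpha_n(L_n^{-1}(x))(g-b)(L_n^{-1}(x))$, $x\in I_n$. For sets $F,B\subset E$: $F*_Tb:=\{f*_Tb: f\in F\}$, $f*_TB:=\{f*_Tb: b\in B\}$. For subsets $A,C$, $\delta(A,C):=\inf\{\|g-g'\|_p: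 g\in A, g'\in C\}$. *)

theory Defs
  imports "HOL-Analysis.Analysis" "HOL-Probability.Essential_Supremum"
begin

definition Iint :: "(nat \<Rightarrow> real) \<Rightarrow> nat \<Rightarrow> real set" where
  "Iint xs N = {xs 0 .. xs N}"

definition Ipart :: "(nat \<Rightarrow> real) \<Rightarrow> nat \<Rightarrow> real set" where
  "Ipart xs n = (if n = 1 then {xs 0 .. xs 1} else {xs (n - 1) <.. xs n})"

text \<open>The affine map L_n with L_n(x_0) = x_{n-1}, L_n(x_N) = x_n, and its inverse.\<close>
definition Laff :: "(nat \<Rightarrow> real) \<Rightarrow> nat \<Rightarrow> nat \<Rightarrow> real \<Rightarrow> real" where
  "Laff xs N n t = xs (n - 1) + (xs n - xs (n - 1)) / (xs N - xs 0) * (t - xs 0)"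

definition Linv :: "(nat \<Rightarrow> real) \<Rightarrow> nat \<Rightarrow> nat \<Rightarrow> real \<Rightarrow> real" where
  "Linv xs N n y = xs 0 + (xs N - xs 0) / (xs n - xs (n - 1)) * (y - xs (n - 1))"

definition lpnorm :: "(nat \<Rightarrow> real) \<Rightarrow> nat \<Rightarrow> ennreal \<Rightarrow> (real \<Rightarrow> real) \<Rightarrow> real" where
  "lpnorm xs N p g =
    (if p = \<infinity> then real_of_ereal (esssup (lebesgue_on (Iint xs N)) (\<lambda>t. ereal \<bar>g t\<bar>))
     else if p < 1 then enn2real (\<integral>\<^sup>+ t. ennreal (\<bar>g t\<bar> powr enn2real p) \<partial>lebesgue_on (Iint xs N))
     else enn2real (\<integral>\<^sup>+ t. ennreal (\<bar>g t\<bar> powr enn2real p) \<partial>lebesgue_on (Iint xs N))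
            powr (1 / enn2real p))"

text \<open>The space L^p(I) (as a set of functions, not equivalence classes).\<close>
definition Lp :: "(nat \<Rightarrow> real) \<Rightarrow> nat \<Rightarrow> ennreal \<Rightarrow> (real \<Rightarrow> real) set" where
  "Lp xs N p = {g. g \<in> borel_measurable (lebesgue_on (Iint xs N)) \<and>
     (if p = \<infinity> then esssup (lebesgue_on (Iint xs N)) (\<lambda>t. ereal \<bar>g t\<bar>) < \<infinity>
      else (\<integral>\<^sup>+ t. ennreal (\<bar>g t\<bar> powr enn2real p) \<partial>lebesgue_on (Iint xs N)) < \<infinity>)}"

definition Lam :: "(nat \<Rightarrow> real) \<Rightarrow> nat \<Rightarrow> (nat \<Rightarrow> real \<Rightarrow> real) \<Rightarrow> ereal" where
  "Lam xs N \<alpha> = Max ((\<lambda>n. esssup (lebesgue_on (Iint xs N)) (\<lambda>t. ereal \<bar>\<alpha> n t\<bar>)) ` {1..N})"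

definition Top :: "(nat \<Rightarrow> real) \<Rightarrow> nat \<Rightarrow> (nat \<Rightarrow> real \<Rightarrow> real) \<Rightarrow>
    (real \<Rightarrow> real) \<Rightarrow> (real \<Rightarrow> real) \<Rightarrow> (real \<Rightarrow> real) \<Rightarrow> real \<Rightarrow> real" where
  "Top xs N \<alpha> f b g y = f y + (\<Sum>n\<in>{1..N}. indicator (Ipart xs n) y *
      (\<alpha> n (Linv xs N n y) * (g (Linv xs N n y) - b (Linv xs N n y))))"

text \<open>f *_T b: the (a.e. unique) fixed point of T in L^p(I).\<close>
definition fstar :: "(nat \<Rightarrow> real) \<Rightarrow> nat \<Rightarrow> (nat \<Rightarrow> real \<Rightarrow> real) \<Rightarrow> ennreal \<Rightarrow>
    (real \<Rightarrow> real) \<Rightarrow> (real \<Rightarrow> real) \<Rightarrow> (real \<Rightarrow> real)" where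
  "fstar xs N \<alpha> p f b = (SOME h. h \<in> Lp xs N p \<and>
      (AE y in lebesgue_on (Iint xs N). Top xs N \<alpha> f b h y = h y))"

definition delta :: "(nat \<Rightarrow> real) \<Rightarrow> nat \<Rightarrow> ennreal \<Rightarrow> (real \<Rightarrow> real) set \<Rightarrow> (real \<Rightarrow> real) set \<Rightarrow> real" where
  "delta xs N p A C = Inf {lpnorm xs N p (\<lambda>t. g t - g' t) | g g'. g \<in> A \<and> g' \<in> C}"

end

theory Submission
  imports Defs
begin

lemma conv0:
  fixes q X Y t :: real
  assumes q: "1 \<le> q" and X: "0 \<le> X" and Y: "0 \<le> Y" and t: "0 \<le> t" "t \<le> 1"
  shows "((1 - t) * X + t * Y) powr q \<le> (1 - t) * X powr q + t * Y powr q"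
proof (cases "X = 0 \<or> Y = 0")
  case True
  have tq: "t powr q \<le> t" using powr_mono'[of 1 q t] t q by simp
  have tq': "(1 - t) powr q \<le> 1 - t" using powr_mono'[of 1 q "1 - t"] t q by simp
  show ?thesis
  proof (cases "X = 0")
    case True
    then have "((1 - t) * X + t * Y) powr q = t powr q * Y powr q" using t Y by (simp add: powr_mult)
    also have "\<dots> \<le> t * Y powr q" using tq by (intro mult_right_mono) auto
    finally show ?thesis using True q by simp
  next
    case False
    then have Y0: "Y = 0" using \<open>X = 0 \<or> Y = 0\<close> by simp
    then have "((1 - t) * X + t * Y) powr q = (1 - t) powr q * X powr q" using t X by (simp add: powr_mult)
    also have "\<dots> \<le> (1 - t) * X powr q" using tq' by (intro mult_right_mono) auto
    finally show ?thesis using Y0 q by simp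
  qed
next
  case False
  then have "X \<in> {0<..}" "Y \<in> {0<..}" using X Y by auto
  from convex_onD[OF powr_convex[OF q] t this] show ?thesis by simp
qed

lemma pw_ge1:
  fixes q l a b :: real
  assumes q: "1 \<le> q" and l: "0 < l" "l < 1"
  shows "\<bar>a + b\<bar> powr q \<le> l powr (1 - q) * \<bar>a\<bar> powr q + (1 - l) powr (1 - q) * \<bar>b\<bar> powr q"
proof -
  let ?x = "\<bar>a\<bar>" and ?y = "\<bar>b\<bar>"
  have "\<bar>a + b\<bar> powr q \<le> (?x + ?y) powr q" using q by (intro powr_mono2) (auto simp: abs_triangle_ineq)
  also have "?x + ?y = (1 - (1 - l)) * (?x / l) + (1 - l) * (?y / (1 - l))" using l by simp
  also have "(\<dots>) powr q \<le> (1 - (1 - l)) * (?x / l) powr q + (1 - l) * (?y / (1 - l)) powr q"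
    by (rule conv0) (use q l in auto)
  also have "(1 - (1 - l)) * (?x / l) powr q = l powr (1 - q) * ?x powr q"
  proof -
    have "(1 - (1 - l)) * (?x / l) powr q = l * (?x powr q / l powr q)" using l by (simp add: powr_divide)
    also have "\<dots> = (l powr 1 / l powr q) * ?x powr q" using l by simp
    also have "l powr 1 / l powr q = l powr (1 - q)" using l by (simp add: powr_diff)
    finally show ?thesis .
  qed
  also have "(1 - l) * (?y / (1 - l)) powr q = (1 - l) powr (1 - q) * ?y powr q"
  proof -
    have "(1 - l) * (?y / (1 - l)) powr q = (1 - l) * (?y powr q / (1 - l) powr q)" using l by (simp add: powr_divide)
    also have "\<dots> = ((1 - l) powr 1 / (1 - l) powr q) * ?y powr q" using l by simp
    also have "(1 - l) powr 1 / (1 - l) powr q = (1 - l) powr (1 - q)" using l by (simp add: powr_diff)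
    finally show ?thesis .
  qed
  finally show ?thesis .
qed

lemma pw_lt1:
  fixes q a b :: real
  assumes q: "0 < q" "q \<le> 1"
  shows "\<bar>a + b\<bar> powr q \<le> \<bar>a\<bar> powr q + \<bar>b\<bar> powr q"
proof -
  let ?x = "\<bar>a\<bar>" and ?y = "\<bar>b\<bar>"
  have "\<bar>a + b\<bar> powr q \<le> (?x + ?y) powr q" using q by (intro powr_mono2) (auto simp: abs_triangle_ineq)
  also have "(?x + ?y) powr q \<le> ?x powr q + ?y powr q"
  proof (cases "?x + ?y = 0")
    case True
    then have "a = 0" "b = 0" by (metis abs_ge_zero abs_eq_0 add_nonneg_eq_0_iff)+
    then show ?thesis by simp
  next
    case False
    define s where "s = ?x + ?y"
    have s: "s > 0" using False by (simp add: s_def)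
    have 1: "?x / s \<le> (?x / s) powr q" using powr_mono'[of q 1 "?x / s"] q s by (simp add: s_def)
    have 2: "?y / s \<le> (?y / s) powr q" using powr_mono'[of q 1 "?y / s"] q s by (simp add: s_def)
    have "1 = ?x / s + ?y / s" using s by (simp add: s_def add_divide_distrib[symmetric])
    also have "\<dots> \<le> (?x / s) powr q + (?y / s) powr q" using 1 2 by simp
    also have "\<dots> = (?x powr q + ?y powr q) / s powr q" by (simp add: powr_divide add_divide_distrib)
    finally have "s powr q \<le> ?x powr q + ?y powr q" using s by (simp add: le_divide_eq)
    then show ?thesis by (simp add: s_def)
  qed
  finally show ?thesis .
qed

lemma mink_real:
  fixes q A B X :: real
  assumes q: "1 \<le> q" and A: "0 \<le> A" and B: "0 \<le> B" and X: "0 \<le> X"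
    and H: "\<And>l. 0 < l \<Longrightarrow> l < 1 \<Longrightarrow> X \<le> l powr (1 - q) * A + (1 - l) powr (1 - q) * B"
  shows "X powr (1 / q) \<le> A powr (1 / q) + B powr (1 / q)"
proof (rule field_le_epsilon)
  fix e :: real assume e: "0 < e"
  define a where "a = A powr (1 / q)"
  define b where "b = B powr (1 / q)"
  have a: "0 \<le> a" and b: "0 \<le> b" by (simp_all add: a_def b_def)
  have aq: "a powr q = A" using q A by (simp add: a_def powr_powr)
  have bq: "b powr q = B" using q B by (simp add: b_def powr_powr)
  define S where "S = a + b + e"
  define l where "l = (a + e / 2) / S"
  have S: "S > 0" using a b e by (simp add: S_def)
  have l: "0 < l" "l < 1" using a b e S by (auto simp: l_def S_def field_simps)
  have aS: "a + e / 2 = l * S" using S by (simp add: l_def)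
  have bS: "b + e / 2 = (1 - l) * S" using S by (simp add: l_def S_def field_simps)
  have key: "c powr (1 - q) * z powr q \<le> c * S powr q" if c: "0 < c" and z: "0 \<le> z" "z \<le> c * S" for c z
  proof -
    have "c powr (1 - q) * z powr q \<le> c powr (1 - q) * (c * S) powr q"
      using q z by (intro mult_left_mono powr_mono2) auto
    also have "\<dots> = c powr (1 - q) * c powr q * S powr q" using c S by (simp add: powr_mult)
    also have "c powr (1 - q) * c powr q = c" using c by (simp add: powr_add[symmetric])
    finally show ?thesis .
  qed
  have "X \<le> l powr (1 - q) * A + (1 - l) powr (1 - q) * B" by (rule H[OF l])
  also have "l powr (1 - q) * A \<le> l * S powr q"
    unfolding aq[symmetric] by (rule key) (use l a e aS in auto)
  also have "(1 - l) powr (1 - q) * B \<le> (1 - l) * S powr q"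
    unfolding bq[symmetric] by (rule key) (use l b e bS in auto)
  also have "l * S powr q + (1 - l) * S powr q = S powr q" by (simp add: algebra_simps)
  finally have "X \<le> S powr q" by simp
  then have "X powr (1 / q) \<le> (S powr q) powr (1 / q)" using X q by (intro powr_mono2) auto
  also have "\<dots> = S" using S q by (simp add: powr_powr)
  finally show "X powr (1 / q) \<le> A powr (1 / q) + B powr (1 / q) + e"
    by (simp add: S_def a_def b_def)
qed


lemma aff_meas: fixes c t :: real assumes "c \<noteq> 0" shows "(\<lambda>x. t + c * x) \<in> lebesgue \<rightarrow>\<^sub>M lebesgue"
  using lebesgue_affine_measurable[where c="\<lambda>_. c" and t=t] assms by simp

lemma aff_nn: fixes c t :: real assumes f: "f \<in> borel_measurable lebesgue" and c: "c \<noteq> 0"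
  shows "(\<integral>\<^sup>+x. f (t + c * x) \<partial>lebesgue) = ennreal (1 / \<bar>c\<bar>) * (\<integral>\<^sup>+x. f x \<partial>lebesgue)"
proof -
  have "(\<integral>\<^sup>+x. f x \<partial>lebesgue) = ennreal \<bar>c\<bar> * (\<integral>\<^sup>+x. f (t + c * x) \<partial>lebesgue)"
    by (rule nn_integral_real_affine_lebesgue[OF f c])
  hence "ennreal (1 / \<bar>c\<bar>) * (\<integral>\<^sup>+x. f x \<partial>lebesgue) = ennreal (1 / \<bar>c\<bar>) * ennreal \<bar>c\<bar> * (\<integral>\<^sup>+x. f (t + c * x) \<partial>lebesgue)"
    by (simp add: mult.assoc)
  also have "ennreal (1 / \<bar>c\<bar>) * ennreal \<bar>c\<bar> = 1" using c
    by (simp add: ennreal_mult[symmetric])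
  finally show ?thesis by simp
qed

lemma aff_AE: fixes c t :: real assumes c: "c \<noteq> 0" and ae: "AE x in lebesgue. Q x"
  shows "AE y in lebesgue. Q (t + c * y)"
proof -
  from ae obtain Z where Z: "{x \<in> space lebesgue. \<not> Q x} \<subseteq> Z" "emeasure lebesgue Z = 0" "Z \<in> sets lebesgue"
    by (rule AE_E)
  have im: "indicator Z \<in> borel_measurable lebesgue" using Z(3) by simp
  have pre: "(\<lambda>x. t + c * x) -` Z \<in> sets lebesgue"
    using measurable_sets[OF aff_meas[OF c, of t] Z(3)] by simp
  have "emeasure lebesgue ((\<lambda>x. t + c * x) -` Z) = (\<integral>\<^sup>+y. indicator Z (t + c * y) \<partial>lebesgue)"
    using pre by (simp add: nn_integral_indicator[symmetric] indicator_def)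
  also have "\<dots> = ennreal (1 / \<bar>c\<bar>) * (\<integral>\<^sup>+x. indicator Z x \<partial>lebesgue)"
    by (rule aff_nn[OF im c])
  also have "\<dots> = 0" using Z by simp
  finally have "(\<lambda>x. t + c * x) -` Z \<in> null_sets lebesgue" using pre by auto
  then show ?thesis
    by (rule AE_I') (use Z(1) in auto)
qed

lemma AE_neq_leb: "AE x in lebesgue. x \<noteq> (c::real)"
  using AE_completion[OF AE_lborel_singleton[of c]] by simp

locale fis =
  fixes xs :: "nat \<Rightarrow> real" and N :: nat and \<alpha> :: "nat \<Rightarrow> real \<Rightarrow> real"
  assumes N2: "2 \<le> N" and incr: "\<forall>i<N. xs i < xs (Suc i)"
    and alpha: "\<forall>n\<in>{1..N}. \<alpha> n \<in> Lp xs N \<infinity>" and Lam1: "Lam xs N \<alpha> < 1"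
begin

abbreviation "I \<equiv> Iint xs N"
abbreviation "\<mu> \<equiv> lebesgue_on (Iint xs N)"
abbreviation "lam \<equiv> real_of_ereal (Lam xs N \<alpha>)"

lemma xs_less: "i < j \<Longrightarrow> j \<le> N \<Longrightarrow> xs i < xs j"
proof (induction j)
  case 0 then show ?case by simp
next
  case (Suc j)
  have j: "j < N" using Suc.prems by simp
  have step: "xs j < xs (Suc j)" using incr j by simp
  show ?case
  proof (cases "i < j")
    case True then have "xs i < xs j" using Suc.IH j by simp
    then show ?thesis using step by simp
  next
    case False then have "i = j" using Suc.prems by simp
    then show ?thesis using step by simp
  qed
qed

lemma xs_le: "i \<le> j \<Longrightarrow> j \<le> N \<Longrightarrow> xs i \<le> xs j"
  using xs_less by (metis order_le_less order_refl)

lemma I_eq: "I = {xs 0 .. xs N}" by (simp add: Iint_def)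

lemma len_pos: "xs 0 < xs N" using xs_less[of 0 N] N2 by simp

lemma seg_pos: "n \<in> {1..N} \<Longrightarrow> xs (n - 1) < xs n" using xs_less[of "n - 1" n] by simp

lemma I_sets[simp]: "I \<in> sets lebesgue" by (simp add: Iint_def)

lemma Ipart_sets[simp]: "Ipart xs n \<in> sets lebesgue" by (simp add: Ipart_def)

lemma space_mu[simp]: "space \<mu> = I" by simp

lemma Ipart_sub: "n \<in> {1..N} \<Longrightarrow> Ipart xs n \<subseteq> I"
proof -
  assume n: "n \<in> {1..N}"
  have "xs 0 \<le> xs (n - 1)" "xs n \<le> xs N" using xs_le n by auto
  then show ?thesis by (auto simp: Ipart_def Iint_def)
qed

lemma Ipart_cover: assumes "y \<in> I" shows "\<exists>m\<in>{1..N}. y \<in> Ipart xs m"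
proof (cases "y \<le> xs 1")
  case True then show ?thesis using assms N2 by (auto simp: Ipart_def Iint_def intro!: bexI[of _ 1])
next
  case False
  define k where "k = (LEAST k. y \<le> xs k)"
  have yN: "y \<le> xs N" using assms by (simp add: Iint_def)
  have k1: "y \<le> xs k" unfolding k_def by (rule LeastI[of _ N]) (rule yN)
  have k2: "k \<le> N" unfolding k_def by (rule Least_le) (rule yN)
  have k3: "k \<ge> 2"
  proof (rule ccontr)
    assume "\<not> k \<ge> 2" then have "k \<le> 1" by simp
    then have "xs k \<le> xs 1" using xs_le N2 by auto
    then show False using k1 False by simp
  qed
  have "\<not> y \<le> xs (k - 1)" using not_less_Least[of "k - 1" "\<lambda>k. y \<le> xs k"] k3 unfolding k_def by simp
  then show ?thesis using k1 k2 k3 by (auto simp: Ipart_def intro!: bexI[of _ k])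
qed

lemma Ipart_disj: assumes "m \<in> {1..N}" "n \<in> {1..N}" "y \<in> Ipart xs m" "y \<in> Ipart xs n" shows "m = n"
proof (rule ccontr)
  assume ne: "m \<noteq> n"
  have *: False if "a \<in> {1..N}" "b \<in> {1..N}" "a < b" "y \<in> Ipart xs a" "y \<in> Ipart xs b" for a b
  proof -
    have "y \<le> xs a" using that by (auto simp: Ipart_def split: if_splits)
    moreover have "xs a \<le> xs (b - 1)" using that xs_le by auto
    moreover have "xs (b - 1) < y" using that by (auto simp: Ipart_def split: if_splits)
    ultimately show False by simp
  qed
  show False
  proof (cases "m < n")
    case True then show ?thesis using *[of m n] assms by blast
  next
    case False then have "n < m" using ne by simp
    then show ?thesis using *[of n m] assms by blast
  qed
qed

lemma Linv_in: assumes "n \<in> {1..N}" "y \<in> Ipart xs n" shows "Linv xs N n y \<in> I"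
proof -
  have s: "xs (n - 1) < xs n" using seg_pos assms by simp
  have l: "xs 0 < xs N" by (rule len_pos)
  have y: "xs (n - 1) \<le> y" "y \<le> xs n" using assms by (auto simp: Ipart_def split: if_splits)
  have "0 \<le> (xs N - xs 0) / (xs n - xs (n - 1)) * (y - xs (n - 1))"
    using s l y by simp
  moreover have "(xs N - xs 0) / (xs n - xs (n - 1)) * (y - xs (n - 1)) \<le> (xs N - xs 0)"
  proof -
    have "(y - xs (n - 1)) / (xs n - xs (n - 1)) \<le> 1" using s y by simp
    then have "(xs N - xs 0) * ((y - xs (n - 1)) / (xs n - xs (n - 1))) \<le> (xs N - xs 0) * 1"
      using l by (intro mult_left_mono) auto
    then show ?thesis by simp
  qed
  ultimately show ?thesis by (simp add: Linv_def Iint_def)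
qed

lemma Linv_iff: assumes "n \<in> {1..N}" "y \<noteq> xs (n - 1)"
  shows "(y \<in> Ipart xs n) \<longleftrightarrow> Linv xs N n y \<in> I"
proof
  assume "y \<in> Ipart xs n" then show "Linv xs N n y \<in> I" using Linv_in assms by simp
next
  assume a: "Linv xs N n y \<in> I"
  have s: "xs (n - 1) < xs n" using seg_pos assms by simp
  have l: "xs 0 < xs N" by (rule len_pos)
  define L where "L = xs N - xs 0"
  define d where "d = xs n - xs (n - 1)"
  define z where "z = y - xs (n - 1)"
  have L: "L > 0" and d: "d > 0" using s l by (auto simp: L_def d_def)
  have e: "Linv xs N n y = xs 0 + L / d * z" by (simp add: Linv_def L_def d_def z_def)
  have a1: "0 \<le> L / d * z" and a2: "L / d * z \<le> L"
    using a unfolding e I_eq L_def by auto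
  have "0 \<le> z" using a1 L d by (simp add: zero_le_mult_iff zero_le_divide_iff)
  then have "xs (n - 1) \<le> y" by (simp add: z_def)
  moreover have "y \<le> xs n"
  proof -
    have "L * (z / d) \<le> L * 1" using a2 by simp
    then have "z / d \<le> 1" using L by (simp only: mult_le_cancel_left_pos)
    then have "z \<le> d" using d by (simp add: divide_le_eq)
    then show ?thesis by (simp add: z_def d_def)
  qed
  ultimately show "y \<in> Ipart xs n" using assms by (auto simp: Ipart_def)
qed

lemma sum_single:
  fixes G :: "nat \<Rightarrow> 'b::comm_semiring_1"
  assumes "m \<in> {1..N}" "y \<in> Ipart xs m"
  shows "(\<Sum>n\<in>{1..N}. indicator (Ipart xs n) y * G n) = G m"
proof -
  have "(\<Sum>n\<in>{1..N}. indicator (Ipart xs n) y * G n) = indicator (Ipart xs m) y * G m + (\<Sum>n\<in>{1..N} - {m}. indicator (Ipart xs n) y * G n)"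
    using assms by (intro sum.remove) auto
  also have "(\<Sum>n\<in>{1..N} - {m}. indicator (Ipart xs n) y * G n) = 0"
    using Ipart_disj assms by (intro sum.neutral) (auto simp: indicator_def)
  finally show ?thesis using assms by simp
qed

lemma sum_out:
  fixes G :: "nat \<Rightarrow> 'b::comm_semiring_1"
  assumes "y \<notin> I"
  shows "(\<Sum>n\<in>{1..N}. indicator (Ipart xs n) y * G n) = 0"
proof -
  have "\<forall>n\<in>{1..N}. y \<notin> Ipart xs n" using Ipart_sub assms by blast
  then show ?thesis by (intro sum.neutral) (auto simp: indicator_def)
qed

lemma telesc: "(\<Sum>n\<in>{1..K}. xs n - xs (n - 1)) = xs K - xs 0"
  by (induction K) simp_all

end

context fis begin

definition Aop :: "(real \<Rightarrow> real) \<Rightarrow> real \<Rightarrow> real" where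
  "Aop \<phi> y = (\<Sum>n\<in>{1..N}. indicator (Ipart xs n) y * (\<alpha> n (Linv xs N n y) * \<phi> (Linv xs N n y)))"

lemma Aop_at: "m \<in> {1..N} \<Longrightarrow> y \<in> Ipart xs m \<Longrightarrow> Aop \<phi> y = \<alpha> m (Linv xs N m y) * \<phi> (Linv xs N m y)"
  unfolding Aop_def by (rule sum_single)

lemma Aop_out: "y \<notin> I \<Longrightarrow> Aop \<phi> y = 0"
  unfolding Aop_def by (rule sum_out)

lemma Aop_diff: "Aop (\<lambda>t. u t - v t) y = Aop u y - Aop v y"
  unfolding Aop_def sum_subtractf[symmetric] by (rule sum.cong) (simp_all only: right_diff_distrib)

lemma Top_eq: "Top xs N \<alpha> f b g y = f y + Aop (\<lambda>t. g t - b t) y"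
  by (simp add: Top_def Aop_def)

lemma Linv_aff: assumes "n \<in> {1..N}"
  shows "Linv xs N n = (\<lambda>y. (xs 0 - (xs N - xs 0) / (xs n - xs (n - 1)) * xs (n - 1)) + ((xs N - xs 0) / (xs n - xs (n - 1))) * y)"
proof -
  have *: "\<And>a c x y::real. a + c * (y - x) = (a - c * x) + c * y" by (simp add: algebra_simps)
  show ?thesis unfolding Linv_def by (rule ext, rule *)
qed

lemma Linv_c: assumes "n \<in> {1..N}" shows "(xs N - xs 0) / (xs n - xs (n - 1)) > 0"
  using len_pos seg_pos[OF assms] by simp

lemma Linv_meas: assumes "n \<in> {1..N}" shows "Linv xs N n \<in> lebesgue \<rightarrow>\<^sub>M lebesgue"
  unfolding Linv_aff[OF assms] by (rule aff_meas) (metis Linv_c[OF assms] less_irrefl)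

lemma lift_meas: "(\<phi>::real\<Rightarrow>real) \<in> borel_measurable \<mu> \<Longrightarrow> (\<lambda>t. indicator I t * \<phi> t) \<in> borel_measurable lebesgue"
  using borel_measurable_restrict_space_iff[of I lebesgue \<phi>] by simp

lemma lift_meas_enn: "(\<psi>::real \<Rightarrow> ennreal) \<in> borel_measurable \<mu> \<Longrightarrow> (\<lambda>t. \<psi> t * indicator I t) \<in> borel_measurable lebesgue"
  using borel_measurable_restrict_space_iff_ennreal[of I lebesgue \<psi>] by simp

lemma meas_comp: assumes phi: "(\<phi>::real\<Rightarrow>real) \<in> borel_measurable \<mu>" and n: "n \<in> {1..N}"
  shows "(\<lambda>y. indicator (Ipart xs n) y * \<phi> (Linv xs N n y)) \<in> borel_measurable \<mu>"
proof -
  define G where "G = (\<lambda>t. indicator I t * \<phi> t) \<circ> Linv xs N n"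
  have G[measurable]: "G \<in> borel_measurable lebesgue"
    unfolding G_def by (rule measurable_comp[OF Linv_meas[OF n] lift_meas[OF phi]])
  have "(\<lambda>y. indicator (Ipart xs n) y * G y) \<in> borel_measurable lebesgue"
    by (intro borel_measurable_times borel_measurable_times_ennreal borel_measurable_indicator G Ipart_sets)
  also have "(\<lambda>y. indicator (Ipart xs n) y * G y) = (\<lambda>y. indicator (Ipart xs n) y * \<phi> (Linv xs N n y))"
    using Linv_in[OF n] by (auto simp: indicator_def fun_eq_iff G_def)
  finally show ?thesis by (rule measurable_restrict_space1)
qed

lemma meas_comp_enn: assumes psi: "(\<psi>::real \<Rightarrow> ennreal) \<in> borel_measurable \<mu>" and n: "n \<in> {1..N}"
  shows "(\<lambda>y. indicator (Ipart xs n) y * \<psi> (Linv xs N n y)) \<in> borel_measurable \<mu>"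
proof -
  define G where "G = (\<lambda>t. \<psi> t * indicator I t) \<circ> Linv xs N n"
  have G[measurable]: "G \<in> borel_measurable lebesgue"
    unfolding G_def by (rule measurable_comp[OF Linv_meas[OF n] lift_meas_enn[OF psi]])
  have "(\<lambda>y. indicator (Ipart xs n) y * G y) \<in> borel_measurable lebesgue"
    by (intro borel_measurable_times borel_measurable_times_ennreal borel_measurable_indicator G Ipart_sets)
  also have "(\<lambda>y. indicator (Ipart xs n) y * G y) = (\<lambda>y. indicator (Ipart xs n) y * \<psi> (Linv xs N n y))"
    using Linv_in[OF n] by (auto simp: indicator_def fun_eq_iff G_def)
  finally show ?thesis by (rule measurable_restrict_space1)
qed

lemma CV: assumes psi: "(\<psi>::real \<Rightarrow> ennreal) \<in> borel_measurable \<mu>" and n: "n \<in> {1..N}"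
  shows "(\<integral>\<^sup>+y. indicator (Ipart xs n) y * \<psi> (Linv xs N n y) \<partial>\<mu>)
       = ennreal ((xs n - xs (n - 1)) / (xs N - xs 0)) * (\<integral>\<^sup>+t. \<psi> t \<partial>\<mu>)"
proof -
  define c where "c = (xs N - xs 0) / (xs n - xs (n - 1))"
  define t0 where "t0 = xs 0 - (xs N - xs 0) / (xs n - xs (n - 1)) * xs (n - 1)"
  have c: "c > 0" unfolding c_def by (rule Linv_c[OF n])
  have L: "Linv xs N n = (\<lambda>y. t0 + c * y)" unfolding c_def t0_def by (rule Linv_aff[OF n])
  let ?psi' = "\<lambda>t. \<psi> t * indicator I t"
  have "(\<integral>\<^sup>+y. indicator (Ipart xs n) y * \<psi> (Linv xs N n y) \<partial>\<mu>)
      = (\<integral>\<^sup>+y. indicator (Ipart xs n) y * \<psi> (Linv xs N n y) * indicator I y \<partial>lebesgue)"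
    by (simp add: nn_integral_restrict_space)
  also have "\<dots> = (\<integral>\<^sup>+y. ?psi' (t0 + c * y) \<partial>lebesgue)"
  proof (rule nn_integral_cong_AE)
    show "AE y in lebesgue. indicator (Ipart xs n) y * \<psi> (Linv xs N n y) * indicator I y = ?psi' (t0 + c * y)"
      using AE_neq_leb[of "xs (n - 1)"]
    proof eventually_elim
      case (elim y)
      have iff: "(y \<in> Ipart xs n) \<longleftrightarrow> Linv xs N n y \<in> I" by (rule Linv_iff[OF n elim])
      have sub: "y \<in> Ipart xs n \<Longrightarrow> y \<in> I" using Ipart_sub[OF n] by blast
      show ?case using iff sub unfolding L by (auto simp: indicator_def)
    qed
  qed
  also have "\<dots> = ennreal (1 / \<bar>c\<bar>) * (\<integral>\<^sup>+t. ?psi' t \<partial>lebesgue)"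
    by (rule aff_nn[OF lift_meas_enn[OF psi]]) (use c in simp)
  also have "(\<integral>\<^sup>+t. ?psi' t \<partial>lebesgue) = (\<integral>\<^sup>+t. \<psi> t \<partial>\<mu>)"
    by (simp add: nn_integral_restrict_space)
  also have "1 / \<bar>c\<bar> = (xs n - xs (n - 1)) / (xs N - xs 0)"
  proof -
    have "xs n - xs (n - 1) > 0" "xs N - xs 0 > 0" using len_pos seg_pos[OF n] by auto
    then show ?thesis using c by (simp add: c_def)
  qed
  finally show ?thesis .
qed

lemma NP: assumes ae: "AE t in \<mu>. P t" and n: "n \<in> {1..N}"
  shows "AE y in \<mu>. y \<in> Ipart xs n \<longrightarrow> P (Linv xs N n y)"
proof -
  define c where "c = (xs N - xs 0) / (xs n - xs (n - 1))"
  define t0 where "t0 = xs 0 - (xs N - xs 0) / (xs n - xs (n - 1)) * xs (n - 1)"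
  have c: "c > 0" unfolding c_def by (rule Linv_c[OF n])
  have L: "Linv xs N n = (\<lambda>y. t0 + c * y)" unfolding c_def t0_def by (rule Linv_aff[OF n])
  have "AE t in lebesgue. t \<in> I \<longrightarrow> P t" using ae by (simp add: AE_restrict_space_iff)
  then have "AE y in lebesgue. t0 + c * y \<in> I \<longrightarrow> P (t0 + c * y)"
    by (rule aff_AE[rotated]) (use c in simp)
  then have "AE y in lebesgue. y \<in> I \<longrightarrow> y \<in> Ipart xs n \<longrightarrow> P (Linv xs N n y)"
    by eventually_elim (use Linv_in[OF n] in \<open>auto simp: L\<close>)
  then show ?thesis by (simp add: AE_restrict_space_iff)
qed

lemma alpha_meas: "n \<in> {1..N} \<Longrightarrow> \<alpha> n \<in> borel_measurable \<mu>"
  using alpha by (auto simp: Lp_def)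

lemma Aop_meas: assumes phi: "(\<phi>::real\<Rightarrow>real) \<in> borel_measurable \<mu>" shows "Aop \<phi> \<in> borel_measurable \<mu>"
proof -
  have "\<And>n. n \<in> {1..N} \<Longrightarrow> (\<lambda>y. indicator (Ipart xs n) y * ((\<lambda>t. \<alpha> n t * \<phi> t) (Linv xs N n y))) \<in> borel_measurable \<mu>"
    by (rule meas_comp) (use alpha_meas phi in auto)
  then have "(\<lambda>y. \<Sum>n\<in>{1..N}. indicator (Ipart xs n) y * ((\<lambda>t. \<alpha> n t * \<phi> t) (Linv xs N n y))) \<in> borel_measurable \<mu>"
    by (intro borel_measurable_sum) auto
  then show ?thesis unfolding Aop_def[abs_def] by simp
qed

lemma Aop_pow_meas: "(\<phi>::real\<Rightarrow>real) \<in> borel_measurable \<mu> \<Longrightarrow> (Aop ^^ k) \<phi> \<in> borel_measurable \<mu>"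
  by (induction k) (auto intro: Aop_meas)

lemma mu_pos: "emeasure \<mu> (space \<mu>) > 0"
proof -
  have "emeasure \<mu> (space \<mu>) = emeasure lebesgue I"
    by (simp add: emeasure_restrict_space)
  also have "\<dots> = ennreal (xs N - xs 0)" using len_pos by (simp add: I_eq)
  finally show ?thesis using len_pos by simp
qed

lemma AE_notFalse: "\<not> (AE t in \<mu>. False)"
  using mu_pos ae_filter_eq_bot_iff[of \<mu>] by (simp add: eventually_False)

lemma Lam_le: "Lam xs N \<alpha> \<le> ereal lam"
  using Lam1 by (cases "Lam xs N \<alpha>") auto

lemma lam_AE: assumes n: "n \<in> {1..N}" shows "AE t in \<mu>. \<bar>\<alpha> n t\<bar> \<le> lam"
proof -
  have "esssup \<mu> (\<lambda>t. ereal \<bar>\<alpha> n t\<bar>) \<le> Lam xs N \<alpha>"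
    unfolding Lam_def using n by (intro Max_ge) auto
  then have le: "esssup \<mu> (\<lambda>t. ereal \<bar>\<alpha> n t\<bar>) \<le> ereal lam" using Lam_le by (rule order_trans)
  show ?thesis using esssup_AE[of "\<lambda>t. ereal \<bar>\<alpha> n t\<bar>" \<mu>]
  proof eventually_elim
    case (elim t)
    then have "ereal \<bar>\<alpha> n t\<bar> \<le> ereal lam" using le by (rule order_trans)
    then show ?case by simp
  qed
qed

lemma lam_nonneg: "0 \<le> lam"
proof (rule ccontr)
  assume "\<not> 0 \<le> lam"
  then have "AE t in \<mu>. False" using lam_AE[of 1] N2 by (auto elim: eventually_mono)
  then show False using AE_notFalse by simp
qed

lemma lam_less1: "lam < 1"
  using Lam1 by (cases "Lam xs N \<alpha>") auto

lemma lam_AE_all: "AE y in \<mu>. \<forall>n\<in>{1..N}. y \<in> Ipart xs n \<longrightarrow> \<bar>\<alpha> n (Linv xs N n y)\<bar> \<le> lam"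
proof (rule AE_finite_allI)
  fix n assume n: "n \<in> {1..N}"
  show "AE y in \<mu>. y \<in> Ipart xs n \<longrightarrow> \<bar>\<alpha> n (Linv xs N n y)\<bar> \<le> lam"
    by (rule NP[OF lam_AE[OF n] n])
qed simp

end

context fis begin

lemma J_Aop: assumes q: "0 < q" and phi: "(\<phi>::real\<Rightarrow>real) \<in> borel_measurable \<mu>"
  shows "(\<integral>\<^sup>+y. ennreal (\<bar>Aop \<phi> y\<bar> powr q) \<partial>\<mu>) \<le> ennreal (lam powr q) * (\<integral>\<^sup>+t. ennreal (\<bar>\<phi> t\<bar> powr q) \<partial>\<mu>)"
proof -
  let ?c = "ennreal (lam powr q)"
  let ?X = "\<lambda>n y. indicator (Ipart xs n) y * ennreal (\<bar>\<phi> (Linv xs N n y)\<bar> powr q)"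
  let ?J = "\<integral>\<^sup>+t. ennreal (\<bar>\<phi> t\<bar> powr q) \<partial>\<mu>"
  have psi: "(\<lambda>t. ennreal (\<bar>\<phi> t\<bar> powr q)) \<in> borel_measurable \<mu>" using phi by measurable
  have eq: "ennreal (\<bar>Aop \<phi> y\<bar> powr q) = (\<Sum>n\<in>{1..N}. indicator (Ipart xs n) y * ennreal (\<bar>\<alpha> n (Linv xs N n y)\<bar> powr q * \<bar>\<phi> (Linv xs N n y)\<bar> powr q))" for y
  proof (cases "y \<in> I")
    case True
    then obtain m where m: "m \<in> {1..N}" "y \<in> Ipart xs m" using Ipart_cover by blast
    show ?thesis unfolding Aop_at[OF m] sum_single[OF m]
      by (simp add: abs_mult powr_mult)
  next
    case False
    show ?thesis unfolding Aop_out[OF False] sum_out[OF False] using q by simp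
  qed
  have le: "AE y in \<mu>. (\<Sum>n\<in>{1..N}. indicator (Ipart xs n) y * ennreal (\<bar>\<alpha> n (Linv xs N n y)\<bar> powr q * \<bar>\<phi> (Linv xs N n y)\<bar> powr q))
      \<le> (\<Sum>n\<in>{1..N}. ?c * ?X n y)"
    using lam_AE_all
  proof eventually_elim
    case (elim y)
    show ?case
    proof (rule sum_mono)
      fix n assume n: "n \<in> {1..N}"
      show "indicator (Ipart xs n) y * ennreal (\<bar>\<alpha> n (Linv xs N n y)\<bar> powr q * \<bar>\<phi> (Linv xs N n y)\<bar> powr q) \<le> ?c * ?X n y"
      proof (cases "y \<in> Ipart xs n")
        case True
        have "\<bar>\<alpha> n (Linv xs N n y)\<bar> powr q \<le> lam powr q"
          using elim n True q by (intro powr_mono2) auto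
        then have "\<bar>\<alpha> n (Linv xs N n y)\<bar> powr q * \<bar>\<phi> (Linv xs N n y)\<bar> powr q \<le> lam powr q * \<bar>\<phi> (Linv xs N n y)\<bar> powr q"
          by (intro mult_right_mono) auto
        then show ?thesis using True by (simp add: ennreal_mult'[symmetric] ennreal_leI)
      next
        case False then show ?thesis by simp
      qed
    qed
  qed
  have "(\<integral>\<^sup>+y. ennreal (\<bar>Aop \<phi> y\<bar> powr q) \<partial>\<mu>) = (\<integral>\<^sup>+y. (\<Sum>n\<in>{1..N}. indicator (Ipart xs n) y * ennreal (\<bar>\<alpha> n (Linv xs N n y)\<bar> powr q * \<bar>\<phi> (Linv xs N n y)\<bar> powr q)) \<partial>\<mu>)"
    unfolding eq by simp
  also have "\<dots> \<le> (\<integral>\<^sup>+y. (\<Sum>n\<in>{1..N}. ?c * ?X n y) \<partial>\<mu>)"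
    by (rule nn_integral_mono_AE[OF le])
  also have "\<dots> = (\<Sum>n\<in>{1..N}. (\<integral>\<^sup>+y. ?c * ?X n y \<partial>\<mu>))"
    by (rule nn_integral_sum) (use meas_comp_enn[OF psi] in simp)
  also have "\<dots> = (\<Sum>n\<in>{1..N}. ?c * (ennreal ((xs n - xs (n - 1)) / (xs N - xs 0)) * ?J))"
  proof (rule sum.cong[OF refl])
    fix n assume n: "n \<in> {1..N}"
    have "(\<integral>\<^sup>+y. ?c * ?X n y \<partial>\<mu>) = ?c * (\<integral>\<^sup>+y. ?X n y \<partial>\<mu>)"
      by (rule nn_integral_cmult) (rule meas_comp_enn[OF psi n])
    also have "(\<integral>\<^sup>+y. ?X n y \<partial>\<mu>) = ennreal ((xs n - xs (n - 1)) / (xs N - xs 0)) * ?J"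
      by (rule CV[OF psi n])
    finally show "(\<integral>\<^sup>+y. ?c * ?X n y \<partial>\<mu>) = ?c * (ennreal ((xs n - xs (n - 1)) / (xs N - xs 0)) * ?J)" .
  qed
  also have "\<dots> = ?c * ?J * (\<Sum>n\<in>{1..N}. ennreal ((xs n - xs (n - 1)) / (xs N - xs 0)))"
    by (simp add: sum_distrib_left mult_ac)
  also have "(\<Sum>n\<in>{1..N}. ennreal ((xs n - xs (n - 1)) / (xs N - xs 0))) = ennreal (\<Sum>n\<in>{1..N}. (xs n - xs (n - 1)) / (xs N - xs 0))"
  proof (rule sum_ennreal)
    fix n assume "n \<in> {1..N}"
    then show "0 \<le> (xs n - xs (n - 1)) / (xs N - xs 0)" using seg_pos[of n] len_pos by (intro divide_nonneg_pos) auto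
  qed
  also have "(\<Sum>n\<in>{1..N}. (xs n - xs (n - 1)) / (xs N - xs 0)) = 1"
    unfolding sum_divide_distrib[symmetric] telesc using len_pos by simp
  finally show ?thesis by simp
qed

lemma Aop_inf: assumes phi: "(\<phi>::real\<Rightarrow>real) \<in> borel_measurable \<mu>" and ae: "AE t in \<mu>. \<bar>\<phi> t\<bar> \<le> M" and M: "0 \<le> M"
  shows "AE y in \<mu>. \<bar>Aop \<phi> y\<bar> \<le> lam * M"
proof -
  have "AE y in \<mu>. \<forall>n\<in>{1..N}. y \<in> Ipart xs n \<longrightarrow> \<bar>\<phi> (Linv xs N n y)\<bar> \<le> M"
  proof (rule AE_finite_allI)
    fix n assume n: "n \<in> {1..N}"
    show "AE y in \<mu>. y \<in> Ipart xs n \<longrightarrow> \<bar>\<phi> (Linv xs N n y)\<bar> \<le> M"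
      by (rule NP[OF ae n])
  qed simp
  then show ?thesis using lam_AE_all AE_space[of \<mu>]
  proof eventually_elim
    case (elim y)
    then obtain m where m: "m \<in> {1..N}" "y \<in> Ipart xs m" using Ipart_cover[of y] by auto
    have "\<bar>\<alpha> m (Linv xs N m y) * \<phi> (Linv xs N m y)\<bar> \<le> lam * M"
      unfolding abs_mult using elim m lam_nonneg by (intro mult_mono) auto
    then show ?case unfolding Aop_at[OF m] .
  qed
qed

lemma FP: assumes y: "y \<in> I" and s: "summable (\<lambda>k. \<bar>(Aop ^^ k) c y\<bar>)"
  shows "(\<Sum>k. (Aop ^^ k) c y) = c y + Aop (\<lambda>t. \<Sum>k. (Aop ^^ k) c t) y"
proof -
  obtain m where m: "m \<in> {1..N}" "y \<in> Ipart xs m" using Ipart_cover y by blast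
  define z where "z = Linv xs N m y"
  define w where "w = \<alpha> m z"
  have step: "(Aop ^^ Suc k) c y = w * (Aop ^^ k) c z" for k
    by (simp add: Aop_at[OF m] z_def w_def)
  have s1: "summable (\<lambda>k. (Aop ^^ k) c y)" using s by (rule summable_rabs_cancel)
  have split: "(\<Sum>k. (Aop ^^ k) c y) = c y + (\<Sum>k. (Aop ^^ Suc k) c y)"
    using suminf_split_head[OF s1] by simp
  show ?thesis
  proof (cases "w = 0")
    case True
    then show ?thesis unfolding split Aop_at[OF m] using step
      by (simp add: z_def[symmetric] w_def[symmetric])
  next
    case False
    have "summable (\<lambda>k. \<bar>(Aop ^^ Suc k) c y\<bar>)" using s by (subst summable_Suc_iff)
    then have "summable (\<lambda>k. \<bar>w\<bar> * \<bar>(Aop ^^ k) c z\<bar>)" unfolding step abs_mult .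
    then have "summable (\<lambda>k. \<bar>(Aop ^^ k) c z\<bar>)" using False by (simp add: summable_cmult_iff)
    then have sz: "summable (\<lambda>k. (Aop ^^ k) c z)" by (rule summable_rabs_cancel)
    have "Aop (\<lambda>t. \<Sum>k. (Aop ^^ k) c t) y = w * (\<Sum>k. (Aop ^^ k) c z)"
      by (simp add: Aop_at[OF m] z_def[symmetric] w_def[symmetric])
    also have "\<dots> = (\<Sum>k. w * (Aop ^^ k) c z)" using suminf_mult[OF sz] by simp
    also have "\<dots> = (\<Sum>k. (Aop ^^ Suc k) c y)" unfolding step ..
    finally show ?thesis unfolding split by simp
  qed
qed

end

lemma lpnorm_neg[simp]: "lpnorm xs N p (\<lambda>t. - u t) = lpnorm xs N p u"
  by (simp add: lpnorm_def)

lemma lpnorm_abs[simp]: "lpnorm xs N p (\<lambda>t. \<bar>u t\<bar>) = lpnorm xs N p u"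
  by (simp add: lpnorm_def)

lemma Lp_meas: "u \<in> Lp xs N p \<Longrightarrow> u \<in> borel_measurable (lebesgue_on (Iint xs N))"
  by (simp add: Lp_def)

lemma Lp_neg: assumes "u \<in> Lp xs N p" shows "(\<lambda>t. - u t) \<in> Lp xs N p"
proof -
  have m: "u \<in> borel_measurable (lebesgue_on (Iint xs N))" using assms by (simp add: Lp_def)
  have "(\<lambda>t. - u t) \<in> borel_measurable (lebesgue_on (Iint xs N))" using m by measurable
  then show ?thesis using assms unfolding Lp_def mem_Collect_eq abs_minus_cancel by blast
qed

lemma Lp_abs: assumes "u \<in> Lp xs N p" shows "(\<lambda>t. \<bar>u t\<bar>) \<in> Lp xs N p"
proof -
  have m: "u \<in> borel_measurable (lebesgue_on (Iint xs N))" using assms by (simp add: Lp_def)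
  have "(\<lambda>t. \<bar>u t\<bar>) \<in> borel_measurable (lebesgue_on (Iint xs N))" using m by measurable
  then show ?thesis using assms unfolding Lp_def mem_Collect_eq abs_abs by blast
qed

lemma delta_le:
  assumes "x \<in> A" "y \<in> C" "\<And>x y. x \<in> A \<Longrightarrow> y \<in> C \<Longrightarrow> 0 \<le> lpnorm xs N p (\<lambda>t. x t - y t)"
  shows "delta xs N p A C \<le> lpnorm xs N p (\<lambda>t. x t - y t)"
  unfolding delta_def
proof (rule cInf_lower)
  show "lpnorm xs N p (\<lambda>t. x t - y t) \<in> {lpnorm xs N p (\<lambda>t. g t - g' t) |g g'. g \<in> A \<and> g' \<in> C}"
    using assms by blast
  show "bdd_below {lpnorm xs N p (\<lambda>t. g t - g' t) |g g'. g \<in> A \<and> g' \<in> C}"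
    using assms(3) by (auto intro!: bdd_belowI[of _ 0])
qed

context fis begin

lemma existence:
  fixes p :: ennreal and L :: real
  assumes add: "\<And>u v. u \<in> Lp xs N p \<Longrightarrow> v \<in> Lp xs N p \<Longrightarrow> (\<lambda>t. u t + v t) \<in> Lp xs N p \<and> lpnorm xs N p (\<lambda>t. u t + v t) \<le> lpnorm xs N p u + lpnorm xs N p v"
    and zero: "(\<lambda>t. 0) \<in> Lp xs N p" "lpnorm xs N p (\<lambda>t. 0) = 0"
    and nn: "\<And>u. u \<in> Lp xs N p \<Longrightarrow> 0 \<le> lpnorm xs N p u"
    and aop: "\<And>u. u \<in> Lp xs N p \<Longrightarrow> Aop u \<in> Lp xs N p \<and> lpnorm xs N p (Aop u) \<le> L * lpnorm xs N p u"
    and mc: "\<And>u M. (\<And>n. u n \<in> Lp xs N p \<and> lpnorm xs N p (u n) \<le> M) \<Longrightarrow> (\<And>n y. 0 \<le> u n y \<and> u n y \<le> u (Suc n) y) \<Longrightarrow>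
        (AE y in \<mu>. \<exists>B. \<forall>n. u n y \<le> B) \<and> (\<forall>h\<in>borel_measurable \<mu>. (\<forall>y B. (\<forall>n. u n y \<le> B) \<longrightarrow> \<bar>h y\<bar> \<le> B) \<longrightarrow> h \<in> Lp xs N p)"
    and L: "0 \<le> L" "L < 1"
    and g: "g \<in> Lp xs N p" and b: "b \<in> Lp xs N p"
  shows "\<exists>h\<in>Lp xs N p. AE y in \<mu>. Top xs N \<alpha> g b h y = h y"
proof -
  define c where "c = (\<lambda>y. g y + - Aop b y)"
  have c: "c \<in> Lp xs N p" unfolding c_def using add[OF g Lp_neg[OF conjunct1[OF aop[OF b]]]] by simp
  define a where "a k = (Aop ^^ k) c" for k
  have a: "a k \<in> Lp xs N p \<and> lpnorm xs N p (a k) \<le> L ^ k * lpnorm xs N p c" for k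
  proof (induction k)
    case 0 then show ?case using c by (simp add: a_def)
  next
    case (Suc k)
    have e: "a (Suc k) = Aop (a k)" by (simp add: a_def)
    have "lpnorm xs N p (a (Suc k)) \<le> L * lpnorm xs N p (a k)" using aop Suc.IH e by simp
    also have "\<dots> \<le> L * (L ^ k * lpnorm xs N p c)" using Suc.IH L by (intro mult_left_mono) auto
    finally show ?case using aop Suc.IH e by simp
  qed
  define u where "u n = (\<lambda>y. \<Sum>k<n. \<bar>a k y\<bar>)" for n
  have u: "u n \<in> Lp xs N p \<and> lpnorm xs N p (u n) \<le> (\<Sum>k<n. L ^ k) * lpnorm xs N p c" for n
  proof (induction n)
    case 0 then show ?case using zero by (simp add: u_def)
  next
    case (Suc n)
    have e: "u (Suc n) = (\<lambda>y. u n y + \<bar>a n y\<bar>)" by (simp add: u_def)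
    have m: "(\<lambda>y. u n y + \<bar>a n y\<bar>) \<in> Lp xs N p \<and> lpnorm xs N p (\<lambda>y. u n y + \<bar>a n y\<bar>) \<le> lpnorm xs N p (u n) + lpnorm xs N p (\<lambda>y. \<bar>a n y\<bar>)"
      by (rule add[OF conjunct1[OF Suc.IH] Lp_abs[OF conjunct1[OF a]]])
    have "lpnorm xs N p (\<lambda>y. u n y + \<bar>a n y\<bar>) \<le> (\<Sum>k<n. L ^ k) * lpnorm xs N p c + L ^ n * lpnorm xs N p c"
      using m Suc.IH a[of n] by simp
    also have "\<dots> = (\<Sum>k<Suc n. L ^ k) * lpnorm xs N p c" by (simp add: algebra_simps)
    finally show ?case using m e by simp
  qed
  define M where "M = lpnorm xs N p c / (1 - L)"
  have uM: "u n \<in> Lp xs N p \<and> lpnorm xs N p (u n) \<le> M" for n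
  proof -
    have "(\<Sum>k<n. L ^ k) = (1 - L ^ n) / (1 - L)" using L by (simp add: sum_gp_strict)
    also have "\<dots> \<le> 1 / (1 - L)" using L by (intro divide_right_mono) auto
    finally have "(\<Sum>k<n. L ^ k) * lpnorm xs N p c \<le> 1 / (1 - L) * lpnorm xs N p c"
      using nn[OF c] by (intro mult_right_mono) auto
    then show ?thesis using u[of n] by (simp add: M_def)
  qed
  have umono: "0 \<le> u n y \<and> u n y \<le> u (Suc n) y" for n y
    by (simp add: u_def sum_nonneg)
  note mcr = mc[of u M, OF uM umono]
  define h where "h = (\<lambda>y. \<Sum>k. a k y)"
  have am: "a k \<in> borel_measurable \<mu>" for k using a[of k] Lp_meas by blast
  have hm: "h \<in> borel_measurable \<mu>" unfolding h_def by (rule borel_measurable_suminf) (rule am)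
  have summ: "summable (\<lambda>k. \<bar>a k y\<bar>)" if "\<forall>n. u n y \<le> B" for y B
    by (rule summableI_nonneg_bounded[where x=B]) (use that in \<open>auto simp: u_def\<close>)
  have hb: "\<forall>y B. (\<forall>n. u n y \<le> B) \<longrightarrow> \<bar>h y\<bar> \<le> B"
  proof (intro allI impI)
    fix y B assume yB: "\<forall>n. u n y \<le> B"
    have "\<bar>h y\<bar> \<le> (\<Sum>k. \<bar>a k y\<bar>)" unfolding h_def by (rule summable_rabs[OF summ[OF yB]])
    also have "\<dots> \<le> B" by (rule suminf_le_const[OF summ[OF yB]]) (use yB in \<open>simp add: u_def\<close>)
    finally show "\<bar>h y\<bar> \<le> B" .
  qed
  have hL: "h \<in> Lp xs N p" using mcr hm hb by blast
  have "AE y in \<mu>. Top xs N \<alpha> g b h y = h y"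
    using conjunct1[OF mcr] AE_space[of \<mu>]
  proof eventually_elim
    case (elim y)
    then obtain B where "\<forall>n. u n y \<le> B" by blast
    then have s: "summable (\<lambda>k. \<bar>(Aop ^^ k) c y\<bar>)" using summ unfolding a_def by blast
    have yI: "y \<in> I" using elim by simp
    have hh: "h = (\<lambda>t. \<Sum>k. (Aop ^^ k) c t)" by (simp add: h_def a_def)
    have "h y = c y + Aop h y" unfolding hh by (rule FP[OF yI s])
    then show ?case unfolding Top_eq Aop_diff c_def by simp
  qed
  then show ?thesis using hL by blast
qed

lemma final:
  fixes p :: ennreal and L :: real
  assumes add: "\<And>u v. u \<in> Lp xs N p \<Longrightarrow> v \<in> Lp xs N p \<Longrightarrow> (\<lambda>t. u t + v t) \<in> Lp xs N p \<and> lpnorm xs N p (\<lambda>t. u t + v t) \<le> lpnorm xs N p u + lpnorm xs N p v"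
    and nn: "\<And>u. u \<in> Lp xs N p \<Longrightarrow> 0 \<le> lpnorm xs N p u"
    and aop: "\<And>u. u \<in> Lp xs N p \<Longrightarrow> Aop u \<in> Lp xs N p \<and> lpnorm xs N p (Aop u) \<le> L * lpnorm xs N p u"
    and cong: "\<And>u v. u \<in> Lp xs N p \<Longrightarrow> v \<in> Lp xs N p \<Longrightarrow> (AE y in \<mu>. u y = v y) \<Longrightarrow> lpnorm xs N p u = lpnorm xs N p v"
    and ex: "\<And>g b. g \<in> Lp xs N p \<Longrightarrow> b \<in> Lp xs N p \<Longrightarrow> \<exists>h\<in>Lp xs N p. AE y in \<mu>. Top xs N \<alpha> g b h y = h y"
    and L: "0 \<le> L" "L < 1"
    and F: "F \<subseteq> Lp xs N p" "F \<noteq> {}" "\<forall>g\<in>F. lpnorm xs N p g \<le> MF"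
    and B: "B \<subseteq> Lp xs N p" "B \<noteq> {}" "\<forall>g\<in>B. lpnorm xs N p g \<le> MB"
    and f: "f \<in> Lp xs N p" and b: "b \<in> Lp xs N p"
  shows "delta xs N p F ((\<lambda>f'. fstar xs N \<alpha> p f' b) ` F) \<le> L / (1 - L) * (MF + lpnorm xs N p b)
       \<and> delta xs N p B ((\<lambda>b'. fstar xs N \<alpha> p f b') ` B) \<le> 1 / (1 - L) * (MB + lpnorm xs N p f)"
proof -
  let ?V = "Lp xs N p" and ?n = "lpnorm xs N p"
  have fs: "fstar xs N \<alpha> p g b \<in> ?V \<and> (AE y in \<mu>. Top xs N \<alpha> g b (fstar xs N \<alpha> p g b) y = fstar xs N \<alpha> p g b y)"
    if gV: "g \<in> ?V" and bV: "b \<in> ?V" for g b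
  proof -
    obtain h0 where h0: "h0 \<in> ?V \<and> (AE y in \<mu>. Top xs N \<alpha> g b h0 y = h0 y)" using ex[OF gV bV] by blast
    show ?thesis unfolding fstar_def
      by (rule someI[of "\<lambda>h. h \<in> ?V \<and> (AE y in \<mu>. Top xs N \<alpha> g b h y = h y)", OF h0])
  qed
  have sub: "(\<lambda>t. u t - v t) \<in> ?V \<and> ?n (\<lambda>t. u t - v t) \<le> ?n u + ?n v" if "u \<in> ?V" "v \<in> ?V" for u v
    using add[OF that(1) Lp_neg[OF that(2)]] by simp
  have key: "?n (\<lambda>t. h t - g t) \<le> L * ?n (\<lambda>t. h t - b t) \<and> ?n (\<lambda>t. h t - b t) \<le> ?n (\<lambda>t. h t - g t) + ?n g + ?n b
      \<and> 0 \<le> ?n (\<lambda>t. h t - g t) \<and> 0 \<le> ?n (\<lambda>t. h t - b t) \<and> h \<in> ?V"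
    if g: "g \<in> ?V" and b: "b \<in> ?V" and h: "h = fstar xs N \<alpha> p g b" for g b h
  proof -
    have hV: "h \<in> ?V" and ae: "AE y in \<mu>. Top xs N \<alpha> g b h y = h y" using fs[OF g b] h by auto
    have hb: "(\<lambda>t. h t - b t) \<in> ?V" using sub[OF hV b] by simp
    have hg: "(\<lambda>t. h t - g t) \<in> ?V" using sub[OF hV g] by simp
    have "?n (\<lambda>t. h t - g t) = ?n (Aop (\<lambda>t. h t - b t))"
    proof (rule cong[OF hg conjunct1[OF aop[OF hb]]])
      show "AE y in \<mu>. h y - g y = Aop (\<lambda>t. h t - b t) y"
        using ae by eventually_elim (simp add: Top_eq)
    qed
    also have "\<dots> \<le> L * ?n (\<lambda>t. h t - b t)" using aop[OF hb] by simp
    finally have 1: "?n (\<lambda>t. h t - g t) \<le> L * ?n (\<lambda>t. h t - b t)" .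
    have "(\<lambda>t. h t - b t) = (\<lambda>t. (h t - g t) + (g t - b t))" by simp
    then have "?n (\<lambda>t. h t - b t) \<le> ?n (\<lambda>t. h t - g t) + ?n (\<lambda>t. g t - b t)"
      using add[OF hg conjunct1[OF sub[OF g b]]] by simp
    also have "\<dots> \<le> ?n (\<lambda>t. h t - g t) + (?n g + ?n b)" using sub[OF g b] by simp
    finally show ?thesis using 1 nn hb hg hV by simp
  qed
  have pos: "0 \<le> ?n (\<lambda>t. x t - y t)" if "x \<in> ?V" "y \<in> ?V" for x y using sub[OF that] nn by blast
  have fsV: "fstar xs N \<alpha> p g b \<in> ?V" if "g \<in> ?V" "b \<in> ?V" for g b using fs[OF that] by blast
  have part1: "delta xs N p F ((\<lambda>f'. fstar xs N \<alpha> p f' b) ` F) \<le> L / (1 - L) * (MF + ?n b)"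
  proof -
    obtain g where gF: "g \<in> F" using F by blast
    have g: "g \<in> ?V" using gF F by blast
    define h where "h = fstar xs N \<alpha> p g b"
    note k = key[OF g b h_def]
    define X where "X = ?n (\<lambda>t. h t - g t)"
    have "delta xs N p F ((\<lambda>f'. fstar xs N \<alpha> p f' b) ` F) \<le> ?n (\<lambda>t. g t - h t)"
    proof (rule delta_le)
      show "g \<in> F" by fact
      show "h \<in> (\<lambda>f'. fstar xs N \<alpha> p f' b) ` F" using gF h_def by blast
      fix x y assume "x \<in> F" "y \<in> (\<lambda>f'. fstar xs N \<alpha> p f' b) ` F"
      then show "0 \<le> ?n (\<lambda>t. x t - y t)" using F fsV[OF _ b] pos by blast
    qed
    also have "?n (\<lambda>t. g t - h t) = X"
    proof -
      have "(\<lambda>t. g t - h t) = (\<lambda>t. - (h t - g t))" by simp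
      then show ?thesis unfolding X_def by (simp only: lpnorm_neg)
    qed
    also have "X \<le> L / (1 - L) * (MF + ?n b)"
    proof -
      have "X \<le> L * (X + ?n g + ?n b)" using k L unfolding X_def
        by (meson add_right_mono mult_left_mono order_trans)
      then have "X * (1 - L) \<le> L * (?n g + ?n b)" by (simp add: algebra_simps)
      also have "\<dots> \<le> L * (MF + ?n b)" using F gF L by (intro mult_left_mono) auto
      finally have "X * (1 - L) \<le> L * (MF + ?n b)" .
      then have "X \<le> L * (MF + ?n b) / (1 - L)" using L by (simp add: le_divide_eq)
      then show ?thesis by simp
    qed
    finally show ?thesis .
  qed
  have part2: "delta xs N p B ((\<lambda>b'. fstar xs N \<alpha> p f b') ` B) \<le> 1 / (1 - L) * (MB + ?n f)"
  proof -
    obtain b' where bB: "b' \<in> B" using B by blast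
    have b': "b' \<in> ?V" using bB B by blast
    define h where "h = fstar xs N \<alpha> p f b'"
    note k = key[OF f b' h_def]
    define Y where "Y = ?n (\<lambda>t. h t - b' t)"
    have "delta xs N p B ((\<lambda>b'. fstar xs N \<alpha> p f b') ` B) \<le> ?n (\<lambda>t. b' t - h t)"
    proof (rule delta_le)
      show "b' \<in> B" by fact
      show "h \<in> (\<lambda>b'. fstar xs N \<alpha> p f b') ` B" using bB h_def by blast
      fix x y assume "x \<in> B" "y \<in> (\<lambda>b'. fstar xs N \<alpha> p f b') ` B"
      then show "0 \<le> ?n (\<lambda>t. x t - y t)" using B fsV[OF f] pos by blast
    qed
    also have "?n (\<lambda>t. b' t - h t) = Y"
    proof -
      have "(\<lambda>t. b' t - h t) = (\<lambda>t. - (h t - b' t))" by simp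
      then show ?thesis unfolding Y_def by (simp only: lpnorm_neg)
    qed
    also have "Y \<le> 1 / (1 - L) * (MB + ?n f)"
    proof -
      have "Y \<le> L * Y + ?n f + ?n b'" using k unfolding Y_def by linarith
      then have "Y * (1 - L) \<le> ?n f + ?n b'" by (simp add: algebra_simps)
      also have "\<dots> \<le> MB + ?n f" using B bB by auto
      finally have "Y * (1 - L) \<le> MB + ?n f" .
      then have "Y \<le> (MB + ?n f) / (1 - L)" using L by (simp add: le_divide_eq)
      then show ?thesis by simp
    qed
    finally show ?thesis .
  qed
  show ?thesis using part1 part2 by blast
qed

end

context fis begin

abbreviation "ess g \<equiv> esssup \<mu> (\<lambda>t. ereal \<bar>g t\<bar>)"

lemma ess_nonneg: "0 \<le> ess g"
proof (rule ccontr)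
  assume "\<not> 0 \<le> ess g"
  then have neg: "ess g < 0" by simp
  have "AE t in \<mu>. False" using esssup_AE[of "\<lambda>t. ereal \<bar>g t\<bar>" \<mu>]
  proof eventually_elim
    case (elim t)
    have "0 \<le> ereal \<bar>g t\<bar>" by simp
    then have "0 \<le> ess g" using elim by (rule order_trans)
    then show False using neg by simp
  qed
  then show False using AE_notFalse by simp
qed

lemma Linf_iff: "g \<in> Lp xs N \<infinity> \<longleftrightarrow> g \<in> borel_measurable \<mu> \<and> ess g < \<infinity>"
  unfolding Lp_def mem_Collect_eq if_P[OF refl] ..

lemma lpinf: "lpnorm xs N \<infinity> g = real_of_ereal (ess g)"
  unfolding lpnorm_def if_P[OF refl] ..

lemma E1: assumes "g \<in> Lp xs N \<infinity>" shows "ess g = ereal (lpnorm xs N \<infinity> g) \<and> 0 \<le> lpnorm xs N \<infinity> g"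
proof -
  have "ess g < \<infinity>" using assms Linf_iff by blast
  moreover have "0 \<le> ess g" by (rule ess_nonneg)
  ultimately show ?thesis unfolding lpinf by (cases "ess g") auto
qed

lemma E2: assumes "g \<in> Lp xs N \<infinity>" shows "AE t in \<mu>. \<bar>g t\<bar> \<le> lpnorm xs N \<infinity> g"
  using esssup_AE[of "\<lambda>t. ereal \<bar>g t\<bar>" \<mu>] E1[OF assms] by (auto elim: eventually_mono)

lemma E3: assumes m: "g \<in> borel_measurable \<mu>" and ae: "AE t in \<mu>. \<bar>g t\<bar> \<le> M"
  shows "g \<in> Lp xs N \<infinity> \<and> lpnorm xs N \<infinity> g \<le> M"
proof -
  have mm: "(\<lambda>t. ereal \<bar>g t\<bar>) \<in> borel_measurable \<mu>" using m by measurable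
  have le: "ess g \<le> ereal M" by (rule esssup_I[OF mm]) (use ae in \<open>auto elim: eventually_mono\<close>)
  then have "ess g < \<infinity>" by (rule le_less_trans) simp
  then have gL: "g \<in> Lp xs N \<infinity>" using m Linf_iff by blast
  then show ?thesis using E1[OF gL] le by simp
qed

lemma pkg_inf:
  shows "\<And>u v. u \<in> Lp xs N \<infinity> \<Longrightarrow> v \<in> Lp xs N \<infinity> \<Longrightarrow> (\<lambda>t. u t + v t) \<in> Lp xs N \<infinity> \<and> lpnorm xs N \<infinity> (\<lambda>t. u t + v t) \<le> lpnorm xs N \<infinity> u + lpnorm xs N \<infinity> v"
    and "(\<lambda>t. 0) \<in> Lp xs N \<infinity>" "lpnorm xs N \<infinity> (\<lambda>t. 0) = 0"
    and "\<And>u. u \<in> Lp xs N \<infinity> \<Longrightarrow> 0 \<le> lpnorm xs N \<infinity> u"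
    and "\<And>u. u \<in> Lp xs N \<infinity> \<Longrightarrow> Aop u \<in> Lp xs N \<infinity> \<and> lpnorm xs N \<infinity> (Aop u) \<le> lam * lpnorm xs N \<infinity> u"
    and "\<And>u M. (\<And>n. u n \<in> Lp xs N \<infinity> \<and> lpnorm xs N \<infinity> (u n) \<le> M) \<Longrightarrow> (\<And>n y. 0 \<le> u n y \<and> u n y \<le> u (Suc n) y) \<Longrightarrow>
        (AE y in \<mu>. \<exists>B. \<forall>n. u n y \<le> B) \<and> (\<forall>h\<in>borel_measurable \<mu>. (\<forall>y B. (\<forall>n. u n y \<le> B) \<longrightarrow> \<bar>h y\<bar> \<le> B) \<longrightarrow> h \<in> Lp xs N \<infinity>)"
    and "\<And>u v. u \<in> Lp xs N \<infinity> \<Longrightarrow> v \<in> Lp xs N \<infinity> \<Longrightarrow> (AE y in \<mu>. u y = v y) \<Longrightarrow> lpnorm xs N \<infinity> u = lpnorm xs N \<infinity> v"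
proof -
  fix u v assume u: "u \<in> Lp xs N \<infinity>" and v: "v \<in> Lp xs N \<infinity>"
  have m: "(\<lambda>t. u t + v t) \<in> borel_measurable \<mu>" using u v Lp_meas by (metis borel_measurable_add)
  have "AE t in \<mu>. \<bar>u t + v t\<bar> \<le> lpnorm xs N \<infinity> u + lpnorm xs N \<infinity> v"
    using E2[OF u] E2[OF v] by eventually_elim (meson abs_triangle_ineq add_mono order_trans)
  then show "(\<lambda>t. u t + v t) \<in> Lp xs N \<infinity> \<and> lpnorm xs N \<infinity> (\<lambda>t. u t + v t) \<le> lpnorm xs N \<infinity> u + lpnorm xs N \<infinity> v"
    by (rule E3[OF m])
next
  have "(\<lambda>t. 0::real) \<in> Lp xs N \<infinity> \<and> lpnorm xs N \<infinity> (\<lambda>t. 0) \<le> 0" by (rule E3) auto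
  then show "(\<lambda>t. 0) \<in> Lp xs N \<infinity>" "lpnorm xs N \<infinity> (\<lambda>t. 0) = 0" using E1 by (auto intro: antisym)
next
  fix u assume "u \<in> Lp xs N \<infinity>" then show "0 \<le> lpnorm xs N \<infinity> u" using E1 by blast
next
  fix u assume u: "u \<in> Lp xs N \<infinity>"
  have m: "Aop u \<in> borel_measurable \<mu>" using Aop_meas Lp_meas[OF u] by blast
  have "AE y in \<mu>. \<bar>Aop u y\<bar> \<le> lam * lpnorm xs N \<infinity> u"
    by (rule Aop_inf[OF Lp_meas[OF u] E2[OF u]]) (use E1[OF u] in simp)
  then show "Aop u \<in> Lp xs N \<infinity> \<and> lpnorm xs N \<infinity> (Aop u) \<le> lam * lpnorm xs N \<infinity> u"
    by (rule E3[OF m])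
next
  fix u :: "nat \<Rightarrow> real \<Rightarrow> real" and M
  assume uM: "\<And>n. u n \<in> Lp xs N \<infinity> \<and> lpnorm xs N \<infinity> (u n) \<le> M"
    and mono: "\<And>n y. 0 \<le> u n y \<and> u n y \<le> u (Suc n) y"
  have "\<forall>n. AE y in \<mu>. u n y \<le> M"
  proof
    fix n show "AE y in \<mu>. u n y \<le> M" using E2[OF conjunct1[OF uM[of n]]] uM[of n] mono[of n]
      by (auto elim: eventually_mono)
  qed
  then have ae: "AE y in \<mu>. \<forall>n. u n y \<le> M" by (simp add: AE_all_countable)
  show "(AE y in \<mu>. \<exists>B. \<forall>n. u n y \<le> B) \<and> (\<forall>h\<in>borel_measurable \<mu>. (\<forall>y B. (\<forall>n. u n y \<le> B) \<longrightarrow> \<bar>h y\<bar> \<le> B) \<longrightarrow> h \<in> Lp xs N \<infinity>)"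
  proof (intro conjI ballI impI)
    show "AE y in \<mu>. \<exists>B. \<forall>n. u n y \<le> B" using ae by (auto elim: eventually_mono)
    fix h :: "real \<Rightarrow> real" assume hm: "h \<in> borel_measurable \<mu>" and hb: "\<forall>y B. (\<forall>n. u n y \<le> B) \<longrightarrow> \<bar>h y\<bar> \<le> B"
    have "AE y in \<mu>. \<bar>h y\<bar> \<le> M" using ae by eventually_elim (use hb in blast)
    then show "h \<in> Lp xs N \<infinity>" using E3[OF hm] by blast
  qed
next
  fix u v assume u: "u \<in> Lp xs N \<infinity>" and v: "v \<in> Lp xs N \<infinity>" and ae: "AE y in \<mu>. u y = v y"
  have mu: "(\<lambda>t. ereal \<bar>u t\<bar>) \<in> borel_measurable \<mu>" using Lp_meas[OF u] by measurable
  have mv: "(\<lambda>t. ereal \<bar>v t\<bar>) \<in> borel_measurable \<mu>" using Lp_meas[OF v] by measurable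
  have "ess u = ess v" by (rule esssup_AE_cong[OF mu mv]) (use ae in \<open>auto elim: eventually_mono\<close>)
  then show "lpnorm xs N \<infinity> u = lpnorm xs N \<infinity> v" unfolding lpinf by simp
qed

end

lemma powr_inv_q: "0 \<le> (x::real) \<Longrightarrow> 0 < q \<Longrightarrow> (x powr q) powr (1 / q) = x"
  by (simp add: powr_powr)

lemma powr_inv_q': "0 \<le> (x::real) \<Longrightarrow> 0 < q \<Longrightarrow> (x powr (1 / q)) powr q = x"
  by (simp add: powr_powr)

context fis begin

definition JJ :: "real \<Rightarrow> (real \<Rightarrow> real) \<Rightarrow> ennreal" where
  "JJ q u = (\<integral>\<^sup>+t. ennreal (\<bar>u t\<bar> powr q) \<partial>\<mu>)"

lemma Lp_fin: assumes "p \<noteq> \<infinity>" shows "u \<in> Lp xs N p \<longleftrightarrow> u \<in> borel_measurable \<mu> \<and> JJ (enn2real p) u < \<infinity>"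
  unfolding Lp_def mem_Collect_eq if_not_P[OF assms] JJ_def ..

lemma lpnorm_lt1: assumes "p \<noteq> \<infinity>" "p < 1" shows "lpnorm xs N p u = enn2real (JJ (enn2real p) u)"
  unfolding lpnorm_def if_not_P[OF assms(1)] if_P[OF assms(2)] JJ_def ..

lemma lpnorm_ge1: assumes "p \<noteq> \<infinity>" "\<not> p < 1" shows "lpnorm xs N p u = enn2real (JJ (enn2real p) u) powr (1 / enn2real p)"
  unfolding lpnorm_def if_not_P[OF assms(1)] if_not_P[OF assms(2)] JJ_def ..

lemma JJ_cong: "(AE y in \<mu>. u y = v y) \<Longrightarrow> JJ q u = JJ q v"
  unfolding JJ_def by (rule nn_integral_cong_AE) (auto elim: eventually_mono)

lemma JJ_zero: "JJ q (\<lambda>t. 0) = 0"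
  by (simp add: JJ_def)

lemma JJ_meas: "u \<in> borel_measurable \<mu> \<Longrightarrow> (\<lambda>t. ennreal (\<bar>u t\<bar> powr q)) \<in> borel_measurable \<mu>"
  by measurable

lemma JJ_add_lt1: assumes q: "0 < q" "q \<le> 1" and u: "u \<in> borel_measurable \<mu>" and v: "v \<in> borel_measurable \<mu>"
  shows "JJ q (\<lambda>t. u t + v t) \<le> JJ q u + JJ q v"
proof -
  have "JJ q (\<lambda>t. u t + v t) \<le> (\<integral>\<^sup>+t. ennreal (\<bar>u t\<bar> powr q) + ennreal (\<bar>v t\<bar> powr q) \<partial>\<mu>)"
    unfolding JJ_def
  proof (rule nn_integral_mono)
    fix t
    have "\<bar>u t + v t\<bar> powr q \<le> \<bar>u t\<bar> powr q + \<bar>v t\<bar> powr q" by (rule pw_lt1[OF q])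
    then show "ennreal (\<bar>u t + v t\<bar> powr q) \<le> ennreal (\<bar>u t\<bar> powr q) + ennreal (\<bar>v t\<bar> powr q)"
      by (simp add: ennreal_plus[symmetric] ennreal_leI del: ennreal_plus)
  qed
  also have "\<dots> = JJ q u + JJ q v" unfolding JJ_def
    by (rule nn_integral_add) (use JJ_meas u v in auto)
  finally show ?thesis .
qed

lemma JJ_add_ge1: assumes q: "1 \<le> q" and l: "0 < l" "l < 1" and u: "u \<in> borel_measurable \<mu>" and v: "v \<in> borel_measurable \<mu>"
  shows "JJ q (\<lambda>t. u t + v t) \<le> ennreal (l powr (1 - q)) * JJ q u + ennreal ((1 - l) powr (1 - q)) * JJ q v"
proof -
  have "JJ q (\<lambda>t. u t + v t) \<le> (\<integral>\<^sup>+t. ennreal (l powr (1 - q)) * ennreal (\<bar>u t\<bar> powr q) + ennreal ((1 - l) powr (1 - q)) * ennreal (\<bar>v t\<bar> powr q) \<partial>\<mu>)"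
    unfolding JJ_def
  proof (rule nn_integral_mono)
    fix t
    have "\<bar>u t + v t\<bar> powr q \<le> l powr (1 - q) * \<bar>u t\<bar> powr q + (1 - l) powr (1 - q) * \<bar>v t\<bar> powr q" by (rule pw_ge1[OF q l])
    then show "ennreal (\<bar>u t + v t\<bar> powr q) \<le> ennreal (l powr (1 - q)) * ennreal (\<bar>u t\<bar> powr q) + ennreal ((1 - l) powr (1 - q)) * ennreal (\<bar>v t\<bar> powr q)"
      by (simp add: ennreal_plus[symmetric] ennreal_mult'[symmetric] ennreal_leI del: ennreal_plus)
  qed
  also have "\<dots> = (\<integral>\<^sup>+t. ennreal (l powr (1 - q)) * ennreal (\<bar>u t\<bar> powr q) \<partial>\<mu>) + (\<integral>\<^sup>+t. ennreal ((1 - l) powr (1 - q)) * ennreal (\<bar>v t\<bar> powr q) \<partial>\<mu>)"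
    by (rule nn_integral_add) (use JJ_meas u v in auto)
  also have "\<dots> = ennreal (l powr (1 - q)) * JJ q u + ennreal ((1 - l) powr (1 - q)) * JJ q v"
    unfolding JJ_def
    by (simp only: nn_integral_cmult[OF JJ_meas[OF u]] nn_integral_cmult[OF JJ_meas[OF v]])
  finally show ?thesis .
qed

lemma JJ_Aop: "0 < q \<Longrightarrow> u \<in> borel_measurable \<mu> \<Longrightarrow> JJ q (Aop u) \<le> ennreal (lam powr q) * JJ q u"
  unfolding JJ_def by (rule J_Aop)

lemma MC_fin:
  assumes q: "0 < q"
    and uK: "\<And>n. u n \<in> borel_measurable \<mu> \<and> JJ q (u n) \<le> ennreal K"
    and mono: "\<And>n y. 0 \<le> u n y \<and> u n y \<le> u (Suc n) y"
  shows "(AE y in \<mu>. \<exists>B. \<forall>n. u n y \<le> B) \<and> (\<forall>h\<in>borel_measurable \<mu>. (\<forall>y B. (\<forall>n. u n y \<le> B) \<longrightarrow> \<bar>h y\<bar> \<le> B) \<longrightarrow> JJ q h \<le> ennreal K)"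
proof -
  define f where "f n y = ennreal (\<bar>u n y\<bar> powr q)" for n y
  define S where "S y = (SUP n. f n y)" for y
  have fm: "f n \<in> borel_measurable \<mu>" for n unfolding f_def[abs_def] using JJ_meas uK by blast
  have inc: "incseq f"
  proof (rule incseq_SucI)
    fix n show "f n \<le> f (Suc n)" unfolding le_fun_def f_def
      using mono q by (auto intro!: ennreal_leI powr_mono2)
  qed
  have Sm: "S \<in> borel_measurable \<mu>" unfolding S_def[abs_def] using fm by measurable
  have intS: "(\<integral>\<^sup>+y. S y \<partial>\<mu>) \<le> ennreal K"
  proof -
    have "(\<integral>\<^sup>+y. S y \<partial>\<mu>) = (SUP n. integral\<^sup>N \<mu> (f n))"
      unfolding S_def by (rule nn_integral_monotone_convergence_SUP[OF inc fm])
    also have "\<dots> \<le> ennreal K" using uK by (auto intro!: SUP_least simp: f_def[abs_def] JJ_def)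
    finally show ?thesis .
  qed
  have fin: "AE y in \<mu>. S y \<noteq> \<infinity>"
    by (rule nn_integral_PInf_AE[OF Sm]) (use intS in \<open>auto simp: top_unique\<close>)
  have bnd: "u n y \<le> enn2real (S y) powr (1 / q)" if "S y \<noteq> \<infinity>" for n y
  proof -
    have "f n y \<le> S y" unfolding S_def by (rule SUP_upper) simp
    also have "S y = ennreal (enn2real (S y))" using that by (simp add: less_top)
    finally have "\<bar>u n y\<bar> powr q \<le> enn2real (S y)" unfolding f_def by (simp add: ennreal_le_iff)
    then have "(\<bar>u n y\<bar> powr q) powr (1 / q) \<le> enn2real (S y) powr (1 / q)" using q by (intro powr_mono2) auto
    then show ?thesis using powr_inv_q[of "\<bar>u n y\<bar>" q] q by simp
  qed
  show ?thesis
  proof (intro conjI ballI impI)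
    show "AE y in \<mu>. \<exists>B. \<forall>n. u n y \<le> B" using fin by eventually_elim (use bnd in blast)
    fix h :: "real \<Rightarrow> real" assume hm: "h \<in> borel_measurable \<mu>" and hb: "\<forall>y B. (\<forall>n. u n y \<le> B) \<longrightarrow> \<bar>h y\<bar> \<le> B"
    have "JJ q h \<le> (\<integral>\<^sup>+y. S y \<partial>\<mu>)" unfolding JJ_def
    proof (rule nn_integral_mono)
      fix y show "ennreal (\<bar>h y\<bar> powr q) \<le> S y"
      proof (cases "S y = \<infinity>")
        case True then show ?thesis by simp
      next
        case False
        have "\<bar>h y\<bar> \<le> enn2real (S y) powr (1 / q)" using hb bnd[OF False] by blast
        then have "\<bar>h y\<bar> powr q \<le> (enn2real (S y) powr (1 / q)) powr q" using q by (intro powr_mono2) auto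
        also have "\<dots> = enn2real (S y)" using q by (simp add: powr_inv_q')
        finally have "ennreal (\<bar>h y\<bar> powr q) \<le> ennreal (enn2real (S y))" by (rule ennreal_leI)
        also have "\<dots> = S y" using False by (simp add: less_top)
        finally show ?thesis .
      qed
    qed
    then show "JJ q h \<le> ennreal K" using intS by (rule order_trans)
  qed
qed

end

context fis begin

lemma JJ_fin: assumes "p \<noteq> \<infinity>" "u \<in> Lp xs N p"
  shows "JJ (enn2real p) u = ennreal (enn2real (JJ (enn2real p) u))" "JJ (enn2real p) u < \<infinity>" "u \<in> borel_measurable \<mu>"
  using assms Lp_fin[OF assms(1)] by (auto simp: less_top)

lemma pkg_lt1:
  assumes pinf: "p \<noteq> \<infinity>" and p0: "0 < p" and plt: "p < 1"
  shows "\<And>u v. u \<in> Lp xs N p \<Longrightarrow> v \<in> Lp xs N p \<Longrightarrow> (\<lambda>t. u t + v t) \<in> Lp xs N p \<and> lpnorm xs N p (\<lambda>t. u t + v t) \<le> lpnorm xs N p u + lpnorm xs N p v"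
    and "(\<lambda>t. 0) \<in> Lp xs N p" "lpnorm xs N p (\<lambda>t. 0) = 0"
    and "\<And>u. u \<in> Lp xs N p \<Longrightarrow> 0 \<le> lpnorm xs N p u"
    and "\<And>u. u \<in> Lp xs N p \<Longrightarrow> Aop u \<in> Lp xs N p \<and> lpnorm xs N p (Aop u) \<le> lam powr (enn2real p) * lpnorm xs N p u"
    and "\<And>u M. (\<And>n. u n \<in> Lp xs N p \<and> lpnorm xs N p (u n) \<le> M) \<Longrightarrow> (\<And>n y. 0 \<le> u n y \<and> u n y \<le> u (Suc n) y) \<Longrightarrow>
        (AE y in \<mu>. \<exists>B. \<forall>n. u n y \<le> B) \<and> (\<forall>h\<in>borel_measurable \<mu>. (\<forall>y B. (\<forall>n. u n y \<le> B) \<longrightarrow> \<bar>h y\<bar> \<le> B) \<longrightarrow> h \<in> Lp xs N p)"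
    and "\<And>u v. u \<in> Lp xs N p \<Longrightarrow> v \<in> Lp xs N p \<Longrightarrow> (AE y in \<mu>. u y = v y) \<Longrightarrow> lpnorm xs N p u = lpnorm xs N p v"
proof -
  define q where "q = enn2real p"
  have q: "0 < q" "q \<le> 1" using p0 pinf plt unfolding q_def
    by (auto simp: enn2real_positive_iff less_top)
  have LpI: "u \<in> Lp xs N p" if "u \<in> borel_measurable \<mu>" "JJ q u < \<infinity>" for u
    using Lp_fin[OF pinf] that by (simp add: q_def)
  have nrm: "lpnorm xs N p u = enn2real (JJ q u)" for u using lpnorm_lt1[OF pinf plt] by (simp add: q_def)
  note fin = JJ_fin[OF pinf, folded q_def]
  {
    fix u v assume u: "u \<in> Lp xs N p" and v: "v \<in> Lp xs N p"
    have m: "(\<lambda>t. u t + v t) \<in> borel_measurable \<mu>" using fin(3)[OF u] fin(3)[OF v] by measurable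
    have le: "JJ q (\<lambda>t. u t + v t) \<le> JJ q u + JJ q v" by (rule JJ_add_lt1[OF q fin(3)[OF u] fin(3)[OF v]])
    have lt: "JJ q u + JJ q v < \<infinity>" using fin(2)[OF u] fin(2)[OF v] by (simp add: less_top)
    have "enn2real (JJ q (\<lambda>t. u t + v t)) \<le> enn2real (JJ q u + JJ q v)" using le lt by (intro enn2real_mono) (auto simp: less_top)
    also have "\<dots> = enn2real (JJ q u) + enn2real (JJ q v)" using fin(2)[OF u] fin(2)[OF v] by (intro enn2real_plus) (auto simp: less_top)
    moreover have "JJ q (\<lambda>t. u t + v t) < \<infinity>" using le lt by (rule le_less_trans)
    ultimately show "(\<lambda>t. u t + v t) \<in> Lp xs N p \<and> lpnorm xs N p (\<lambda>t. u t + v t) \<le> lpnorm xs N p u + lpnorm xs N p v"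
      using LpI[OF m] unfolding nrm by simp
  }
  show "(\<lambda>t. 0) \<in> Lp xs N p" by (rule LpI) (simp_all add: JJ_zero)
  show "lpnorm xs N p (\<lambda>t. 0) = 0" by (simp add: nrm JJ_zero)
  show "\<And>u. u \<in> Lp xs N p \<Longrightarrow> 0 \<le> lpnorm xs N p u" by (simp add: nrm)
  {
    fix u assume u: "u \<in> Lp xs N p"
    have m: "Aop u \<in> borel_measurable \<mu>" using Aop_meas fin(3)[OF u] by blast
    have le: "JJ q (Aop u) \<le> ennreal (lam powr q) * JJ q u" by (rule JJ_Aop[OF q(1) fin(3)[OF u]])
    have lt: "ennreal (lam powr q) * JJ q u < \<infinity>" using fin(2)[OF u] by (simp add: ennreal_mult_less_top less_top)
    have "enn2real (JJ q (Aop u)) \<le> enn2real (ennreal (lam powr q) * JJ q u)" using le lt by (intro enn2real_mono) (auto simp: less_top)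
    also have "\<dots> = lam powr q * enn2real (JJ q u)" by (simp add: enn2real_mult)
    finally show "Aop u \<in> Lp xs N p \<and> lpnorm xs N p (Aop u) \<le> lam powr (enn2real p) * lpnorm xs N p u"
      using LpI[OF m] le lt unfolding nrm q_def[symmetric] by (auto intro: le_less_trans)
  }
  {
    fix u :: "nat \<Rightarrow> real \<Rightarrow> real" and M
    assume uM: "\<And>n. u n \<in> Lp xs N p \<and> lpnorm xs N p (u n) \<le> M"
      and mono: "\<And>n y. 0 \<le> u n y \<and> u n y \<le> u (Suc n) y"
    have uK: "u n \<in> borel_measurable \<mu> \<and> JJ q (u n) \<le> ennreal M" for n
    proof -
      have "JJ q (u n) = ennreal (enn2real (JJ q (u n)))" using fin(1) uM by blast
      also have "\<dots> \<le> ennreal M" using uM[of n] unfolding nrm by (intro ennreal_leI) simp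
      finally show ?thesis using fin(3) uM by blast
    qed
    note r = MC_fin[where u=u and K=M, OF q(1) uK mono]
    show "(AE y in \<mu>. \<exists>B. \<forall>n. u n y \<le> B) \<and> (\<forall>h\<in>borel_measurable \<mu>. (\<forall>y B. (\<forall>n. u n y \<le> B) \<longrightarrow> \<bar>h y\<bar> \<le> B) \<longrightarrow> h \<in> Lp xs N p)"
    proof (intro conjI ballI impI)
      show "AE y in \<mu>. \<exists>B. \<forall>n. u n y \<le> B" using r by blast
      fix h :: "real \<Rightarrow> real" assume hm: "h \<in> borel_measurable \<mu>" and hb: "\<forall>y B. (\<forall>n. u n y \<le> B) \<longrightarrow> \<bar>h y\<bar> \<le> B"
      have "JJ q h \<le> ennreal M" using r hm hb by blast
      then have "JJ q h < \<infinity>" by (rule le_less_trans) simp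
      then show "h \<in> Lp xs N p" by (rule LpI[OF hm])
    qed
  }
  show "\<And>u v. u \<in> Lp xs N p \<Longrightarrow> v \<in> Lp xs N p \<Longrightarrow> (AE y in \<mu>. u y = v y) \<Longrightarrow> lpnorm xs N p u = lpnorm xs N p v"
    unfolding nrm using JJ_cong by metis
qed

lemma pkg_ge1:
  assumes pinf: "p \<noteq> \<infinity>" and p0: "0 < p" and plt: "\<not> p < 1"
  shows "\<And>u v. u \<in> Lp xs N p \<Longrightarrow> v \<in> Lp xs N p \<Longrightarrow> (\<lambda>t. u t + v t) \<in> Lp xs N p \<and> lpnorm xs N p (\<lambda>t. u t + v t) \<le> lpnorm xs N p u + lpnorm xs N p v"
    and "(\<lambda>t. 0) \<in> Lp xs N p" "lpnorm xs N p (\<lambda>t. 0) = 0"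
    and "\<And>u. u \<in> Lp xs N p \<Longrightarrow> 0 \<le> lpnorm xs N p u"
    and "\<And>u. u \<in> Lp xs N p \<Longrightarrow> Aop u \<in> Lp xs N p \<and> lpnorm xs N p (Aop u) \<le> lam * lpnorm xs N p u"
    and "\<And>u M. (\<And>n. u n \<in> Lp xs N p \<and> lpnorm xs N p (u n) \<le> M) \<Longrightarrow> (\<And>n y. 0 \<le> u n y \<and> u n y \<le> u (Suc n) y) \<Longrightarrow>
        (AE y in \<mu>. \<exists>B. \<forall>n. u n y \<le> B) \<and> (\<forall>h\<in>borel_measurable \<mu>. (\<forall>y B. (\<forall>n. u n y \<le> B) \<longrightarrow> \<bar>h y\<bar> \<le> B) \<longrightarrow> h \<in> Lp xs N p)"
    and "\<And>u v. u \<in> Lp xs N p \<Longrightarrow> v \<in> Lp xs N p \<Longrightarrow> (AE y in \<mu>. u y = v y) \<Longrightarrow> lpnorm xs N p u = lpnorm xs N p v"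
proof -
  define q where "q = enn2real p"
  have q1: "1 \<le> q" using pinf plt unfolding q_def by (cases p) (auto simp: ennreal_less_one_iff)
  have q: "0 < q" using q1 by simp
  have LpI: "u \<in> Lp xs N p" if "u \<in> borel_measurable \<mu>" "JJ q u < \<infinity>" for u
    using Lp_fin[OF pinf] that by (simp add: q_def)
  have nrm: "lpnorm xs N p u = enn2real (JJ q u) powr (1 / q)" for u using lpnorm_ge1[OF pinf plt] by (simp add: q_def)
  note fin = JJ_fin[OF pinf, folded q_def]
  {
    fix u v assume u: "u \<in> Lp xs N p" and v: "v \<in> Lp xs N p"
    have m: "(\<lambda>t. u t + v t) \<in> borel_measurable \<mu>" using fin(3)[OF u] fin(3)[OF v] by measurable
    have H: "JJ q (\<lambda>t. u t + v t) \<le> ennreal (l powr (1 - q)) * JJ q u + ennreal ((1 - l) powr (1 - q)) * JJ q v"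
      if "0 < l" "l < 1" for l by (rule JJ_add_ge1[OF q1 that fin(3)[OF u] fin(3)[OF v]])
    have lt: "ennreal (l powr (1 - q)) * JJ q u + ennreal ((1 - l) powr (1 - q)) * JJ q v < \<infinity>" for l
      using fin(2)[OF u] fin(2)[OF v] by (simp add: ennreal_mult_less_top)
    have lt2: "JJ q (\<lambda>t. u t + v t) < \<infinity>" using H[of "1/2"] lt[of "1/2"] by (auto intro: le_less_trans)
    have "enn2real (JJ q (\<lambda>t. u t + v t)) powr (1 / q) \<le> enn2real (JJ q u) powr (1 / q) + enn2real (JJ q v) powr (1 / q)"
    proof (rule mink_real[OF q1])
      fix l :: real assume l: "0 < l" "l < 1"
      have "enn2real (JJ q (\<lambda>t. u t + v t)) \<le> enn2real (ennreal (l powr (1 - q)) * JJ q u + ennreal ((1 - l) powr (1 - q)) * JJ q v)"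
        using H[OF l] lt[of l] by (intro enn2real_mono) (auto simp: less_top)
      also have "\<dots> = l powr (1 - q) * enn2real (JJ q u) + (1 - l) powr (1 - q) * enn2real (JJ q v)"
        using fin(2)[OF u] fin(2)[OF v] by (subst enn2real_plus) (auto simp: ennreal_mult_less_top enn2real_mult)
      finally show "enn2real (JJ q (\<lambda>t. u t + v t)) \<le> l powr (1 - q) * enn2real (JJ q u) + (1 - l) powr (1 - q) * enn2real (JJ q v)" .
    qed simp_all
    then show "(\<lambda>t. u t + v t) \<in> Lp xs N p \<and> lpnorm xs N p (\<lambda>t. u t + v t) \<le> lpnorm xs N p u + lpnorm xs N p v"
      using LpI[OF m lt2] unfolding nrm by simp
  }
  show "(\<lambda>t. 0) \<in> Lp xs N p" by (rule LpI) (simp_all add: JJ_zero)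
  show "lpnorm xs N p (\<lambda>t. 0) = 0" by (simp add: nrm JJ_zero)
  show "\<And>u. u \<in> Lp xs N p \<Longrightarrow> 0 \<le> lpnorm xs N p u" by (simp add: nrm)
  {
    fix u assume u: "u \<in> Lp xs N p"
    have m: "Aop u \<in> borel_measurable \<mu>" using Aop_meas fin(3)[OF u] by blast
    have le: "JJ q (Aop u) \<le> ennreal (lam powr q) * JJ q u" by (rule JJ_Aop[OF q fin(3)[OF u]])
    have lt: "ennreal (lam powr q) * JJ q u < \<infinity>" using fin(2)[OF u] by (simp add: ennreal_mult_less_top less_top)
    have "enn2real (JJ q (Aop u)) \<le> enn2real (ennreal (lam powr q) * JJ q u)" using le lt by (intro enn2real_mono) (auto simp: less_top)
    also have "\<dots> = lam powr q * enn2real (JJ q u)" by (simp add: enn2real_mult)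
    finally have "enn2real (JJ q (Aop u)) powr (1 / q) \<le> (lam powr q * enn2real (JJ q u)) powr (1 / q)"
      using q by (intro powr_mono2) auto
    also have "\<dots> = (lam powr q) powr (1 / q) * enn2real (JJ q u) powr (1 / q)" by (simp add: powr_mult)
    also have "(lam powr q) powr (1 / q) = lam" using powr_inv_q[OF lam_nonneg q] .
    finally show "Aop u \<in> Lp xs N p \<and> lpnorm xs N p (Aop u) \<le> lam * lpnorm xs N p u"
      using LpI[OF m] le lt unfolding nrm by (auto intro: le_less_trans)
  }
  {
    fix u :: "nat \<Rightarrow> real \<Rightarrow> real" and M
    assume uM: "\<And>n. u n \<in> Lp xs N p \<and> lpnorm xs N p (u n) \<le> M"
      and mono: "\<And>n y. 0 \<le> u n y \<and> u n y \<le> u (Suc n) y"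
    have uK: "u n \<in> borel_measurable \<mu> \<and> JJ q (u n) \<le> ennreal (M powr q)" for n
    proof -
      have M0: "0 \<le> M" using uM[of n] unfolding nrm by (meson order_trans powr_ge_zero)
      have "enn2real (JJ q (u n)) = (enn2real (JJ q (u n)) powr (1 / q)) powr q" using powr_inv_q'[of _ q] q by simp
      also have "\<dots> \<le> M powr q" using uM[of n] q unfolding nrm by (intro powr_mono2) auto
      finally have "ennreal (enn2real (JJ q (u n))) \<le> ennreal (M powr q)" by (rule ennreal_leI)
      then have "JJ q (u n) \<le> ennreal (M powr q)" using fin(1) uM by metis
      then show ?thesis using fin(3) uM by blast
    qed
    note r = MC_fin[where u=u and K="M powr q", OF q uK mono]
    show "(AE y in \<mu>. \<exists>B. \<forall>n. u n y \<le> B) \<and> (\<forall>h\<in>borel_measurable \<mu>. (\<forall>y B. (\<forall>n. u n y \<le> B) \<longrightarrow> \<bar>h y\<bar> \<le> B) \<longrightarrow> h \<in> Lp xs N p)"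
    proof (intro conjI ballI impI)
      show "AE y in \<mu>. \<exists>B. \<forall>n. u n y \<le> B" using r by blast
      fix h :: "real \<Rightarrow> real" assume hm: "h \<in> borel_measurable \<mu>" and hb: "\<forall>y B. (\<forall>n. u n y \<le> B) \<longrightarrow> \<bar>h y\<bar> \<le> B"
      have "JJ q h \<le> ennreal (M powr q)" using r hm hb by blast
      then have "JJ q h < \<infinity>" by (rule le_less_trans) simp
      then show "h \<in> Lp xs N p" by (rule LpI[OF hm])
    qed
  }
  show "\<And>u v. u \<in> Lp xs N p \<Longrightarrow> v \<in> Lp xs N p \<Longrightarrow> (AE y in \<mu>. u y = v y) \<Longrightarrow> lpnorm xs N p u = lpnorm xs N p v"
    unfolding nrm using JJ_cong by metis
qed

end

theorem proposition5p1:
  fixes xs :: "nat \<Rightarrow> real" and N :: nat and \<alpha> :: "nat \<Rightarrow> real \<Rightarrow> real"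
    and p :: ennreal and F B :: "(real \<Rightarrow> real) set" and MF MB :: real
    and f b :: "real \<Rightarrow> real"
  assumes "2 \<le> N"
    and "\<forall>i<N. xs i < xs (Suc i)"
    and "\<forall>n\<in>{1..N}. \<alpha> n \<in> Lp xs N \<infinity>"
    and "Lam xs N \<alpha> < 1"
    and "0 < p"
    and "F \<subseteq> Lp xs N p" and "F \<noteq> {}" and "\<forall>g\<in>F. lpnorm xs N p g \<le> MF"
    and "B \<subseteq> Lp xs N p" and "B \<noteq> {}" and "\<forall>g\<in>B. lpnorm xs N p g \<le> MB"
    and "f \<in> Lp xs N p" and "b \<in> Lp xs N p"
  shows "let \<Lambda> = (if p < 1 then real_of_ereal (Lam xs N \<alpha>) powr enn2real p
                   else real_of_ereal (Lam xs N \<alpha>))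
         in delta xs N p F ((\<lambda>f'. fstar xs N \<alpha> p f' b) ` F)
              \<le> \<Lambda> / (1 - \<Lambda>) * (MF + lpnorm xs N p b)
          \<and> delta xs N p B ((\<lambda>b'. fstar xs N \<alpha> p f b') ` B)
              \<le> 1 / (1 - \<Lambda>) * (MB + lpnorm xs N p f)"
proof -
  interpret fis xs N \<alpha> using assms(1-4) by unfold_locales
  note Fa = assms(6-8) and Ba = assms(9-11) and fb = assms(12,13)
  show ?thesis
  proof (cases "p = \<infinity>")
    case True
    note P = pkg_inf
    have ex: "\<And>g b. g \<in> Lp xs N \<infinity> \<Longrightarrow> b \<in> Lp xs N \<infinity> \<Longrightarrow> \<exists>h\<in>Lp xs N \<infinity>. AE y in \<mu>. Top xs N \<alpha> g b h y = h y"
      by (rule existence[OF P(1) P(2) P(3) P(4) P(5) P(6) lam_nonneg lam_less1])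
    have r: "delta xs N \<infinity> F ((\<lambda>f'. fstar xs N \<alpha> \<infinity> f' b) ` F) \<le> lam / (1 - lam) * (MF + lpnorm xs N \<infinity> b)
       \<and> delta xs N \<infinity> B ((\<lambda>b'. fstar xs N \<alpha> \<infinity> f b') ` B) \<le> 1 / (1 - lam) * (MB + lpnorm xs N \<infinity> f)"
      by (rule final[OF P(1) P(4) P(5) P(7) ex lam_nonneg lam_less1]) (use Fa Ba fb True in auto)
    have "\<not> p < 1" using True by simp
    then show ?thesis using r True by (simp add: Let_def)
  next
    case pinf: False
    show ?thesis
    proof (cases "p < 1")
      case True
      note P = pkg_lt1[OF pinf assms(5) True]
      define L where "L = lam powr enn2real p"
      have L: "0 \<le> L" "L < 1" unfolding L_def
        using powr_less_mono2[of "enn2real p" lam 1] lam_nonneg lam_less1 assms(5) pinf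
        by (auto simp: enn2real_positive_iff less_top)
      have ex: "\<And>g b. g \<in> Lp xs N p \<Longrightarrow> b \<in> Lp xs N p \<Longrightarrow> \<exists>h\<in>Lp xs N p. AE y in \<mu>. Top xs N \<alpha> g b h y = h y"
        by (rule existence[OF P(1) P(2) P(3) P(4) P(5)[folded L_def] P(6) L])
      have r: "delta xs N p F ((\<lambda>f'. fstar xs N \<alpha> p f' b) ` F) \<le> L / (1 - L) * (MF + lpnorm xs N p b)
         \<and> delta xs N p B ((\<lambda>b'. fstar xs N \<alpha> p f b') ` B) \<le> 1 / (1 - L) * (MB + lpnorm xs N p f)"
        by (rule final[OF P(1) P(4) P(5)[folded L_def] P(7) ex L Fa Ba fb])
      then show ?thesis using True by (simp add: Let_def L_def)
    next
      case False
      note P = pkg_ge1[OF pinf assms(5) False]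
      have ex: "\<And>g b. g \<in> Lp xs N p \<Longrightarrow> b \<in> Lp xs N p \<Longrightarrow> \<exists>h\<in>Lp xs N p. AE y in \<mu>. Top xs N \<alpha> g b h y = h y"
        by (rule existence[OF P(1) P(2) P(3) P(4) P(5) P(6) lam_nonneg lam_less1])
      have r: "delta xs N p F ((\<lambda>f'. fstar xs N \<alpha> p f' b) ` F) \<le> lam / (1 - lam) * (MF + lpnorm xs N p b)
         \<and> delta xs N p B ((\<lambda>b'. fstar xs N \<alpha> p f b') ` B) \<le> 1 / (1 - lam) * (MB + lpnorm xs N p f)"
        by (rule final[OF P(1) P(4) P(5) P(7) ex lam_nonneg lam_less1 Fa Ba fb])
      then show ?thesis using False by (simp add: Let_def)
    qed
  qed
qed


end
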